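(* For each of the rank two exceptional complex reflection groups $G_4,G_5,\dots,G_{22}$ (Shephard–Todd numbering), acting on $\mathbb{C}^2$ by their reflection representations, the reflection length and codimension functions do not coincide: there is an element $g$ with $\ell(g)>\operatorname{codim}(g)$.
   Context: A reflection is an element of $GL(V)$ of finite order fixing a hyperplane pointwise. $\ell(g)$ is the minimal number of reflections in the group whose product is $g$ ($\ell(1)=0$), and $\operatorname{codim}(g)=2-\dim\{v\in\mathbb{C}^2:gv=v\}$. *)

theory Defs
  imports "HOL-Analysis.Analysis"
begin

text \<open>Matrices acting on \<open>\<complex>^2\<close> are modelled as \<open>complex^2^2\<close>, acting by \<open>*v\<close>.\<close>

type_synonym cmat2 = "complex^2^2"

definition mat2 :: "complex \<Rightarrow> complex \<Rightarrow> complex \<Rightarrow> complex \<Rightarrow> cmat2" where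
  "mat2 p q r s = (\<chi> i j. if i = 1 then (if j = 1 then p else q) else (if j = 1 then r else s))"

text \<open>The unit quaternion a + bi + cj + dk as an element of SU(2).\<close>
definition quat :: "real \<Rightarrow> real \<Rightarrow> real \<Rightarrow> real \<Rightarrow> cmat2" where
  "quat a b c d = mat2 (Complex a b) (Complex c d) (Complex (-c) d) (Complex a (-b))"

definition tau :: real where "tau = (1 + sqrt 5) / 2"

text \<open>The matrix \<open>exp(2 pi i k/m) * quat a b c d\<close>.\<close>
definition refl_gen :: "nat \<Rightarrow> nat \<Rightarrow> real \<Rightarrow> real \<Rightarrow> real \<Rightarrow> real \<Rightarrow> cmat2" where
  "refl_gen k m a b c d = (\<chi> i j. cis (2 * pi * real k / real m) * (quat a b c d) $ i $ j)"

text \<open>Subgroup of GL_2(C) generated by a set S of invertible matrices.\<close>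
inductive_set gen_group :: "cmat2 set \<Rightarrow> cmat2 set" for S :: "cmat2 set" where
  one: "mat 1 \<in> gen_group S"
| mul: "s \<in> S \<Longrightarrow> g \<in> gen_group S \<Longrightarrow> s ** g \<in> gen_group S"
| mul_inv: "s \<in> S \<Longrightarrow> t ** s = mat 1 \<Longrightarrow> g \<in> gen_group S \<Longrightarrow> t ** g \<in> gen_group S"

text \<open>Generating reflections of the Shephard--Todd groups G_4, ..., G_22 (entry n-4 is G_n).
  Each generator is (root of unity) * (element of the binary tetrahedral / octahedral /
  icosahedral group).\<close>
definition ST_gens_list :: "cmat2 list list" where
  "ST_gens_list = [
     [refl_gen 1 3 (-1/2) (1/2) (-1/2) (-1/2), refl_gen 1 3 (-1/2) (1/2) (1/2) (1/2), refl_gen 2 3 (-1/2) (1/2) (-1/2) (1/2)],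
     [refl_gen 2 3 (-1/2) (-1/2) (-1/2) (-1/2), refl_gen 2 3 (-1/2) (1/2) (-1/2) (-1/2)],
     [refl_gen 1 4 (0) (0) (0) (1), refl_gen 1 3 (-1/2) (-1/2) (-1/2) (-1/2)],
     [refl_gen 2 3 (-1/2) (-1/2) (-1/2) (-1/2), refl_gen 1 3 (-1/2) (-1/2) (1/2) (1/2), refl_gen 1 4 (0) (-1) (0) (0)],
     [refl_gen 3 8 (-1/sqrt 2) (1/sqrt 2) (0) (0), refl_gen 1 8 (1/sqrt 2) (0) (0) (1/sqrt 2)],
     [refl_gen 1 8 (1/sqrt 2) (1/sqrt 2) (0) (0), refl_gen 1 4 (0) (-1/sqrt 2) (0) (1/sqrt 2)],
     [refl_gen 2 3 (-1/2) (1/2) (-1/2) (-1/2), refl_gen 1 3 (-1/2) (-1/2) (-1/2) (-1/2), refl_gen 1 8 (1/sqrt 2) (0) (-1/sqrt 2) (0)],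
     [refl_gen 2 3 (-1/2) (-1/2) (1/2) (1/2), refl_gen 1 8 (1/sqrt 2) (0) (0) (1/sqrt 2), refl_gen 1 4 (0) (-1/sqrt 2) (0) (-1/sqrt 2)],
     [refl_gen 1 4 (0) (-1/sqrt 2) (0) (-1/sqrt 2), refl_gen 1 4 (0) (1/sqrt 2) (0) (-1/sqrt 2), refl_gen 1 4 (0) (0) (-1/sqrt 2) (-1/sqrt 2)],
     [refl_gen 1 4 (0) (-1/sqrt 2) (0) (-1/sqrt 2), refl_gen 1 4 (0) (0) (0) (1), refl_gen 1 4 (0) (-1/sqrt 2) (-1/sqrt 2) (0)],
     [refl_gen 1 3 (-1/2) (-1/2) (1/2) (1/2), refl_gen 2 3 (-1/2) (-1/2) (-1/2) (1/2), refl_gen 1 4 (0) (-1/sqrt 2) (0) (1/sqrt 2)],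
     [refl_gen 1 4 (0) (1) (0) (0), refl_gen 2 3 (-1/2) (1/2) (-1/2) (-1/2), refl_gen 1 4 (0) (-1/sqrt 2) (0) (-1/sqrt 2)],
     [refl_gen 1 5 (1/(2*tau)) (1/2) (-tau/2) (0), refl_gen 4 5 (1/(2*tau)) (0) (1/2) (-tau/2)],
     [refl_gen 1 4 (0) (tau/2) (1/2) (-1/(2*tau)), refl_gen 1 5 (1/(2*tau)) (tau/2) (0) (1/2)],
     [refl_gen 1 3 (-1/2) (-1/(2*tau)) (0) (tau/2), refl_gen 1 5 (1/(2*tau)) (0) (1/2) (-tau/2)],
     [refl_gen 3 5 (-tau/2) (0) (1/(2*tau)) (1/2), refl_gen 2 3 (-1/2) (-1/2) (-1/2) (-1/2), refl_gen 1 4 (0) (1/(2*tau)) (tau/2) (-1/2)],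
     [refl_gen 1 3 (-1/2) (tau/2) (-1/(2*tau)) (0), refl_gen 2 3 (-1/2) (1/2) (-1/2) (-1/2)],
     [refl_gen 2 3 (-1/2) (-1/2) (1/2) (-1/2), refl_gen 1 4 (0) (0) (0) (-1), refl_gen 1 4 (0) (-1/(2*tau)) (tau/2) (-1/2)],
     [refl_gen 1 4 (0) (-1/(2*tau)) (-tau/2) (-1/2), refl_gen 1 4 (0) (1/(2*tau)) (-tau/2) (1/2), refl_gen 1 4 (0) (1/2) (-1/(2*tau)) (-tau/2)]
  ]"

definition ST_group :: "nat \<Rightarrow> cmat2 set" where
  "ST_group n = gen_group (set (ST_gens_list ! (n - 4)))"

definition mpow :: "cmat2 \<Rightarrow> nat \<Rightarrow> cmat2" where
  "mpow g k = ((\<lambda>h. g ** h) ^^ k) (mat 1)"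

text \<open>A reflection: an element of GL(C^2), not the identity, of finite order,
  fixing a hyperplane (a 1-dimensional complex subspace) pointwise.\<close>
definition is_reflection :: "cmat2 \<Rightarrow> bool" where
  "is_reflection g \<longleftrightarrow> invertible g \<and> g \<noteq> mat 1 \<and> (\<exists>k>0. mpow g k = mat 1) \<and>
     (\<exists>H. vec.subspace H \<and> vec.dim H = 1 \<and> (\<forall>v\<in>H. g *v v = v))"

text \<open>Reflection length with respect to the reflections of G.\<close>
definition refl_length :: "cmat2 set \<Rightarrow> cmat2 \<Rightarrow> nat" where
  "refl_length G g = (LEAST k. \<exists>rs. length rs = k \<and> set rs \<subseteq> {r \<in> G. is_reflection r} \<and>
       g = foldr (**) rs (mat 1))"

definition codim :: "cmat2 \<Rightarrow> nat" where
  "codim g = 2 - vec.dim {v :: complex^2. g *v v = v}"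

end

theory Submission
  imports Defs
begin

(* ---- from A.thy ---- *)
definition scal :: "complex \<Rightarrow> cmat2 \<Rightarrow> cmat2" where
  "scal c M = (\<chi> i j. c * M $ i $ j)"
definition tr2 :: "cmat2 \<Rightarrow> complex" where "tr2 M = M$1$1 + M$2$2"

lemma mat_eq2: "(M::cmat2) = N \<longleftrightarrow> M$1$1 = N$1$1 \<and> M$1$2 = N$1$2 \<and> M$2$1 = N$2$1 \<and> M$2$2 = N$2$2"
  by (auto simp: vec_eq_iff forall_2)

lemma mm_entry: "((A::cmat2) ** B)$i$j = A$i$1*B$1$j + A$i$2*B$2$j"
  by (simp add: matrix_matrix_mult_def sum_2)

lemma mat1_entries: "(mat 1 :: cmat2)$1$1 = 1" "(mat 1 :: cmat2)$1$2 = 0" "(mat 1 :: cmat2)$2$1 = 0" "(mat 1 :: cmat2)$2$2 = 1"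
  by (simp_all add: mat_def)

lemma mat2_entries[simp]: "mat2 p q r s $1$1 = p" "mat2 p q r s $1$2 = q" "mat2 p q r s $2$1 = r" "mat2 p q r s $2$2 = s"
  by (simp_all add: mat2_def)

lemma scal_entries[simp]: "scal c M $i$j = c * M$i$j" by (simp add: scal_def)

lemma det2: "det (M::cmat2) = M$1$1 * M$2$2 - M$1$2 * M$2$1" by (rule det_2)

(* ---- from B.thy ---- *)
lemma mv_entry: "((M::cmat2) *v v)$i = M$i$1 * v$1 + M$i$2 * v$2"
  by (simp add: matrix_vector_mult_def sum_2)

lemma vec_eq2: "(v::complex^2) = w \<longleftrightarrow> v$1 = w$1 \<and> v$2 = w$2"
  by (auto simp: vec_eq_iff forall_2)

lemma refl_char:
  assumes "is_reflection r"
  shows "tr2 r = 1 + det r" "det r \<noteq> 1"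
proof -
  obtain H where H: "vec.subspace H" "vec.dim H = 1" "\<forall>v\<in>H. r *v v = v"
    using assms unfolding is_reflection_def by blast
  obtain k where k: "k > 0" "mpow r k = mat 1" using assms unfolding is_reflection_def by blast
  have rne: "r \<noteq> mat 1" using assms unfolding is_reflection_def by blast
  have "\<not> H \<subseteq> {0}" using H(2) vec.dim_eq_0[of H] by auto
  then obtain v where v: "v \<in> H" "v \<noteq> 0" by blast
  have fx: "r *v v = v" using H(3) v by blast
  define a where "a = r$1$1" define b where "b = r$1$2" define c where "c = r$2$1" define d where "d = r$2$2"
  have e1: "(a-1)* v$1 + b* v$2 = 0" using fx[unfolded vec_eq2 mv_entry] unfolding a_def b_def by (auto simp: algebra_simps)
  have e2: "c* v$1 + (d-1)* v$2 = 0" using fx[unfolded vec_eq2 mv_entry] unfolding c_def d_def by (auto simp: algebra_simps)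
  have vn: "v$1 \<noteq> 0 \<or> v$2 \<noteq> 0" using v(2) by (auto simp: vec_eq2)
  define D where "D = (a-1)*(d-1) - b*c"
  have "D * v$1 = (d-1)*((a-1)* v$1 + b* v$2) - b*(c* v$1 + (d-1)* v$2)" unfolding D_def by algebra
  hence D1: "D * v$1 = 0" using e1 e2 by simp
  have "D * v$2 = (a-1)*(c* v$1 + (d-1)* v$2) - c*((a-1)* v$1 + b* v$2)" unfolding D_def by algebra
  hence D2: "D * v$2 = 0" using e1 e2 by simp
  have D0: "D = 0" using D1 D2 vn by auto
  have dt: "det r = a*d - b*c" unfolding det2 a_def b_def c_def d_def by simp
  have tt: "tr2 r = a + d" unfolding tr2_def a_def d_def by simp
  show trr: "tr2 r = 1 + det r" using D0 unfolding dt tt D_def by (simp add: algebra_simps)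
  show "det r \<noteq> 1"
  proof
    assume d1: "det r = 1"
    hence dd: "d = 2 - a" and bc: "b*c = a*d - 1" using trr dt tt by (auto simp: algebra_simps)
    have pw: "mpow r n = mat2 (1 + of_nat n*(a-1)) (of_nat n * b) (of_nat n * c) (1 + of_nat n*(d-1))" for n
    proof (induction n)
      case 0 thus ?case by (simp add: mpow_def mat_eq2 mat1_entries)
    next
      case (Suc n)
      have "mpow r (Suc n) = r ** mpow r n" by (simp add: mpow_def)
      also have "\<dots> = mat2 (1 + of_nat (Suc n)*(a-1)) (of_nat (Suc n) * b) (of_nat (Suc n) * c) (1 + of_nat (Suc n)*(d-1))"
        unfolding Suc mat_eq2 mm_entry mat2_entries
        unfolding a_def[symmetric] b_def[symmetric] c_def[symmetric] d_def[symmetric]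
        using bc dd by (intro conjI; simp add: algebra_simps; algebra)
      finally show ?case .
    qed
    have "mat2 (1 + of_nat k*(a-1)) (of_nat k * b) (of_nat k * c) (1 + of_nat k*(d-1)) = mat 1"
      using k pw by simp
    hence "of_nat k * b = 0" "of_nat k * c = 0" "of_nat k*(a-1) = 0" "of_nat k*(d-1) = 0"
      unfolding mat_eq2 mat1_entries by auto
    hence "b = 0" "c = 0" "a = 1" "d = 1" using k(1) by auto
    hence "r = mat 1" unfolding mat_eq2 mat1_entries a_def b_def c_def d_def by simp
    thus False using rne by simp
  qed
qed

(* ---- from C.thy ---- *)
lemma geo_sum: "(\<delta> - 1) * (\<Sum>i<n. \<delta>^i) = (\<delta>::complex)^n - 1"
  by (induction n) (auto simp: algebra_simps)

lemma make_refl: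
  assumes tr: "tr2 M = 1 + det M" and d1: "det M \<noteq> 1" and dm: "det M ^ m = 1" and m: "m > 0"
  shows "is_reflection M"
proof -
  define a where "a = M$1$1" define b where "b = M$1$2" define c where "c = M$2$1" define d where "d = M$2$2"
  define \<delta> where "\<delta> = det M"
  have dt: "\<delta> = a*d - b*c" unfolding \<delta>_def det2 a_def b_def c_def d_def by simp
  have tt: "a + d = 1 + \<delta>" using tr unfolding \<delta>_def tr2_def a_def d_def by simp
  have dnz: "\<delta> \<noteq> 0" using dm m unfolding \<delta>_def by (auto simp: power_0_left)
  have inv: "invertible M" using dnz unfolding \<delta>_def by (simp add: invertible_det_nz)
  have ne: "M \<noteq> mat 1" using d1 by auto
  define u where "u n = (\<Sum>i<n. \<delta>^i)" for n
  have us: "u (Suc n) = 1 + \<delta> * u n" for n unfolding u_def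
    by (subst sum.lessThan_Suc_shift) (simp add: sum_distrib_left)
  have pw: "mpow M n = mat2 (1 + u n*(a-1)) (u n * b) (u n * c) (1 + u n*(d-1))" for n
  proof (induction n)
    case 0 thus ?case by (simp add: mpow_def mat_eq2 mat1_entries u_def)
  next
    case (Suc n)
    have "mpow M (Suc n) = M ** mpow M n" by (simp add: mpow_def)
    also have "\<dots> = mat2 (1 + u (Suc n)*(a-1)) (u (Suc n) * b) (u (Suc n) * c) (1 + u (Suc n)*(d-1))"
      unfolding Suc mat_eq2 mm_entry mat2_entries us
      unfolding a_def[symmetric] b_def[symmetric] c_def[symmetric] d_def[symmetric]
      using dt tt by (intro conjI; simp add: algebra_simps; algebra)
    finally show ?case .
  qed
  have "(\<delta> - 1) * u m = 0" unfolding u_def geo_sum using dm \<delta>_def by simp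
  hence um: "u m = 0" using d1 \<delta>_def by simp
  have ord: "mpow M m = mat 1" unfolding pw um by (simp add: mat_eq2 mat1_entries)
  have D0: "(a-1)*(d-1) - b*c = 0" using dt tt by algebra
  obtain v :: "complex^2" where v: "v \<noteq> 0" "M *v v = v"
  proof (cases "b \<noteq> 0 \<or> a \<noteq> 1")
    case True
    let ?v = "vector [b, 1 - a] :: complex^2"
    show ?thesis
    proof (rule that[of ?v])
      show "?v \<noteq> 0" using True by (auto simp: vec_eq2)
      show "M *v ?v = ?v" unfolding vec_eq2 mv_entry
        unfolding a_def[symmetric] b_def[symmetric] c_def[symmetric] d_def[symmetric]
        using D0 by (simp; algebra)
    qed
  next
    case False
    hence ab: "b = 0" "a = 1" by auto
    have "c \<noteq> 0 \<or> d \<noteq> 1"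
    proof (rule ccontr)
      assume "\<not> (c \<noteq> 0 \<or> d \<noteq> 1)"
      hence "M = mat 1" using ab unfolding mat_eq2 mat1_entries a_def b_def c_def d_def by auto
      thus False using ne by simp
    qed
    let ?v = "vector [1 - d, c] :: complex^2"
    show ?thesis
    proof (rule that[of ?v])
      show "?v \<noteq> 0" using \<open>c \<noteq> 0 \<or> d \<noteq> 1\<close> by (auto simp: vec_eq2)
      show "M *v ?v = ?v" unfolding vec_eq2 mv_entry
        unfolding a_def[symmetric] b_def[symmetric] c_def[symmetric] d_def[symmetric]
        using ab by (simp add: algebra_simps)
    qed
  qed
  let ?H = "vec.span {v}"
  have "vec.independent {v}" using v(1) by (intro vec.independent_insertI) (auto simp: vec.independent_empty)
  hence dimH: "vec.dim ?H = 1" by (simp add: vec.dim_span_eq_card_independent)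
  have fixH: "\<forall>w\<in>?H. M *v w = w"
  proof
    fix w assume "w \<in> ?H"
    then obtain k where w: "w = k *s v" unfolding vec.span_singleton by auto
    have e: "M$1$1 * v$1 + M$1$2 * v$2 = v$1" "M$2$1 * v$1 + M$2$2 * v$2 = v$2"
      using v(2) unfolding vec_eq2 mv_entry by auto
    have "M$1$1 * (k * v$1) + M$1$2 * (k * v$2) = k * v$1" "M$2$1 * (k * v$1) + M$2$2 * (k * v$2) = k * v$2"
      using e by (simp_all add: algebra_simps) (metis distrib_left mult.left_commute)+
    thus "M *v w = w" unfolding w vec_eq2 mv_entry by simp
  qed
  show ?thesis unfolding is_reflection_def using inv ne ord m dimH fixH by blast
qed

(* ---- from D.thy ---- *)
lemma cis_eq1: "cis x = 1 \<Longrightarrow> \<exists>n::int. x = 2*pi*n"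
proof -
  assume "cis x = 1"
  hence "Re (cis x) = 1" by simp
  hence "cos x = 1" by simp
  then obtain n::int where "x = n*2*pi" using cos_one_2pi_int by auto
  thus ?thesis by (auto simp: algebra_simps)
qed

lemma refl_gen_scal: "refl_gen k m a b c d = scal (cis (2*pi*k/m)) (quat a b c d)"
  by (simp add: refl_gen_def scal_def)

lemma quat_entries[simp]: "quat a b c d $1$1 = Complex a b" "quat a b c d $1$2 = Complex c d"
  "quat a b c d $2$1 = Complex (-c) d" "quat a b c d $2$2 = Complex a (-b)"
  by (simp_all add: quat_def)

lemma tr_sq: "tr2 (scal w (quat a b c d)) = w * (2*a)"
  unfolding tr2_def by (simp add: algebra_simps complex_eq_iff)

lemma det_sq: "det (scal w (quat a b c d)) = w^2 * (a^2+b^2+c^2+d^2)"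
  unfolding det2 by (simp add: algebra_simps complex_eq_iff power2_eq_square)

lemma refl_gen_refl:
  assumes "a = cos(2*pi*k/m)" "a^2+b^2+c^2+d^2 = 1" "m > 0" "\<not> (m dvd 2*k)"
  shows "is_reflection (refl_gen k m a b c d)"
proof -
  define \<theta> where "\<theta> = 2*pi*k/m"
  have dt: "det (refl_gen k m a b c d) = cis (2*\<theta>)"
    unfolding refl_gen_scal det_sq assms(2) \<theta>_def[symmetric] by (simp add: DeMoivre[symmetric] power2_eq_square cis_mult)
  have tt: "tr2 (refl_gen k m a b c d) = 1 + cis (2*\<theta>)"
    unfolding refl_gen_scal tr_sq assms(1) \<theta>_def[symmetric]
    using cos_double_cos[of \<theta>] sin_double[of \<theta>]
    by (simp add: complex_eq_iff power2_eq_square algebra_simps)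
  have "real m * (2*\<theta>) = 2*pi*(2*k)" unfolding \<theta>_def using assms(3) by (simp add: field_simps)
  hence "cis (2*\<theta>) ^ m = cis (2*pi*(2*k))" by (metis Complex.DeMoivre)
  hence dm: "cis (2*\<theta>) ^ m = 1" by (metis cis_multiple_2pi Ints_of_nat of_nat_mult of_nat_numeral)
  have d1: "cis (2*\<theta>) \<noteq> 1"
  proof
    assume "cis (2*\<theta>) = 1"
    then obtain n::int where n: "2*\<theta> = 2*pi*n" using cis_eq1 by blast
    hence "real (2*k) = real m * n" unfolding \<theta>_def using assms(3) by (simp add: field_simps)
    hence "int (2*k) = int m * n" by (metis of_int_eq_iff of_int_mult of_int_of_nat_eq)
    hence "int m dvd int (2*k)" by simp
    thus False using assms(4) by (simp only: int_dvd_int_iff)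
  qed
  show ?thesis by (rule make_refl[OF _ _ _ assms(3)]) (use dt tt dm d1 in auto)
qed

(* ---- from E.thy ---- *)
lemma word_in_group: "set w \<subseteq> S \<Longrightarrow> foldr (**) w (mat 1) \<in> gen_group S"
  by (induction w) (auto intro: gen_group.intros)

lemma det_invariant:
  assumes "\<forall>s\<in>S. det s ^ d = 1" "g \<in> gen_group S"
  shows "det g ^ d = 1"
  using assms(2)
proof (induction rule: gen_group.induct)
  case one thus ?case by simp
next
  case (mul s g) thus ?case using assms(1) by (simp add: det_mul power_mult_distrib)
next
  case (mul_inv s t g)
  have "det t * det s = 1" using mul_inv(2) by (metis det_I det_mul)
  hence "det t ^ d * det s ^ d = 1" by (metis power_mult_distrib power_one)
  hence "det t ^ d = 1" using assms(1) mul_inv(1) by simp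
  thus ?case using mul_inv by (simp add: det_mul power_mult_distrib)
qed

lemma codim_le: "codim g \<le> 2" unfolding codim_def by simp

lemma len_ge3:
  assumes w: "set w \<subseteq> {r\<in>G. is_reflection r}" "g = foldr (**) w (mat 1)"
    and ne: "g \<noteq> mat 1" and nr: "\<not> is_reflection g"
    and n2: "\<And>r1 r2. r1 \<in> G \<Longrightarrow> is_reflection r1 \<Longrightarrow> r2 \<in> G \<Longrightarrow> is_reflection r2 \<Longrightarrow> r1 ** r2 \<noteq> g"
  shows "refl_length G g > codim g"
proof -
  let ?P = "\<lambda>k. \<exists>rs. length rs = k \<and> set rs \<subseteq> {r \<in> G. is_reflection r} \<and> g = foldr (**) rs (mat 1)"
  have ex: "?P (length w)" using w by blast
  have "?P (Least ?P)" by (rule LeastI[of ?P, OF ex])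
  then obtain rs where rs: "length rs = Least ?P" "set rs \<subseteq> {r \<in> G. is_reflection r}" "g = foldr (**) rs (mat 1)" by blast
  have "length rs \<ge> 3"
  proof (rule ccontr)
    assume "\<not> length rs \<ge> 3"
    hence "length rs = 0 \<or> length rs = 1 \<or> length rs = 2" by arith
    thus False
    proof (elim disjE)
      assume "length rs = 0" thus False using rs ne by simp
    next
      assume "length rs = 1"
      then obtain r where "rs = [r]" by (auto simp: length_Suc_conv)
      thus False using rs nr by (auto simp: matrix_mul_rid)
    next
      assume "length rs = 2"
      then obtain r1 r2 where "rs = [r1, r2]" by (auto simp: length_Suc_conv numeral_2_eq_2)
      thus False using rs n2[of r1 r2] by (auto simp: matrix_mul_rid)
    qed
  qed
  hence "refl_length G g \<ge> 3" unfolding refl_length_def using rs(1) by simp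
  thus ?thesis using codim_le[of g] by simp
qed

text \<open>Scalar matrices.\<close>
lemma scalar_prod_det:
  assumes r1: "is_reflection r1" and r2: "is_reflection r2" and e: "r1 ** r2 = mat2 l 0 0 l" and l1: "l \<noteq> 1"
  shows "det r1 = l"
proof -
  define a where "a = r1$1$1" define b where "b = r1$1$2" define c where "c = r1$2$1" define d where "d = r1$2$2"
  define \<delta> where "\<delta> = det r1"
  have dt: "\<delta> = a*d - b*c" unfolding \<delta>_def det2 a_def b_def c_def d_def by simp
  have t1: "a + d = 1 + \<delta>" using refl_char(1)[OF r1] unfolding \<delta>_def tr2_def a_def d_def by simp
  have t2: "tr2 r2 = 1 + det r2" using refl_char(1)[OF r2] .
  have dd: "\<delta> * det r2 = l*l" using e unfolding \<delta>_def by (metis det_mul det2 mat2_entries mult_zero_left diff_zero)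
  have e11: "a * r2$1$1 + b * r2$2$1 = l" and e12: "a * r2$1$2 + b * r2$2$2 = 0"
   and e21: "c * r2$1$1 + d * r2$2$1 = 0" and e22: "c * r2$1$2 + d * r2$2$2 = l"
    using e unfolding mat_eq2 mm_entry mat2_entries a_def b_def c_def d_def by auto
  have "\<delta> * r2$1$1 = d*(a * r2$1$1 + b * r2$2$1) - b*(c * r2$1$1 + d * r2$2$1)" unfolding dt by (simp add: algebra_simps)
  hence "\<delta> * r2$1$1 = d * l" using e11 e21 by simp
  moreover have "\<delta> * r2$2$2 = a*(c * r2$1$2 + d * r2$2$2) - c*(a * r2$1$2 + b * r2$2$2)" unfolding dt by (simp add: algebra_simps)
  hence "\<delta> * r2$2$2 = a * l" using e12 e22 by simp
  ultimately have "\<delta> * tr2 r2 = l * (a + d)" unfolding tr2_def by (simp add: algebra_simps)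
  hence "\<delta> + l*l = l * (1 + \<delta>)" using t1 t2 dd by (simp add: algebra_simps)
  hence "(l - 1) * (\<delta> - l) = 0" by algebra
  thus ?thesis using l1 \<delta>_def by simp
qed

lemma scalar_not_refl: "l \<noteq> 1 \<Longrightarrow> \<not> is_reflection (mat2 l 0 0 l)"
proof
  assume l: "l \<noteq> 1" and r: "is_reflection (mat2 l 0 0 l)"
  have "tr2 (mat2 l 0 0 l) = 1 + det (mat2 l 0 0 l)" by (rule refl_char(1)[OF r])
  hence "(l - 1)^2 = 0" unfolding tr2_def det2 by (simp add: power2_eq_square algebra_simps)
  thus False using l by simp
qed

lemma scalar_case:
  assumes w: "set w \<subseteq> S" "S \<subseteq> Collect is_reflection" "mat2 l 0 0 l = foldr (**) w (mat 1)"
    and dS: "\<forall>s\<in>S. det s ^ d = 1" and ld: "l ^ d \<noteq> 1"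
  shows "\<exists>g \<in> gen_group S. refl_length (gen_group S) g > codim g"
proof -
  have l1: "l \<noteq> 1" using ld by auto
  have "set w \<subseteq> {r \<in> gen_group S. is_reflection r}"
    using w(1,2) by (auto intro: gen_group.intros(2)[OF _ gen_group.one, simplified matrix_mul_rid])
  moreover have "mat2 l 0 0 l \<noteq> mat 1" using l1 by (simp add: mat_eq2 mat1_entries)
  moreover have "r1 ** r2 \<noteq> mat2 l 0 0 l" if "r1 \<in> gen_group S" "is_reflection r1" "is_reflection r2" for r1 r2
  proof
    assume "r1 ** r2 = mat2 l 0 0 l"
    hence "det r1 = l" using scalar_prod_det that l1 by blast
    moreover have "det r1 ^ d = 1" by (rule det_invariant[OF dS that(1)])
    ultimately show False using ld by simp
  qed
  ultimately have "refl_length (gen_group S) (mat2 l 0 0 l) > codim (mat2 l 0 0 l)"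
    using len_ge3[of w "gen_group S" "mat2 l 0 0 l"] w(3) scalar_not_refl[OF l1] by blast
  moreover have "mat2 l 0 0 l \<in> gen_group S" using w by (metis word_in_group)
  ultimately show ?thesis by blast
qed

(* ---- from F.thy ---- *)
lemma mpow_Suc: "mpow M (Suc n) = M ** mpow M n" by (simp add: mpow_def)
lemma mpow_0: "mpow M 0 = mat 1" by (simp add: mpow_def)

lemma power_scalar:
  assumes tr: "tr2 M = \<alpha> + \<beta>" and dt: "det M = \<alpha> * \<beta>" and ab: "\<alpha> \<noteq> \<beta>"
    and an: "\<alpha>^n = l" and bn: "\<beta>^n = l" and n: "n > 0"
  shows "mpow M n = mat2 l 0 0 l"
proof -
  define a where "a = M$1$1" define b where "b = M$1$2" define c where "c = M$2$1" define d where "d = M$2$2"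
  define u where "u k = (\<alpha>^k - \<beta>^k)/(\<alpha> - \<beta>)" for k
  have ab0: "\<alpha> - \<beta> \<noteq> 0" using ab by simp
  have t: "a + d = \<alpha> + \<beta>" using tr unfolding tr2_def a_def d_def by simp
  have dd: "a*d - b*c = \<alpha>*\<beta>" using dt unfolding det2 a_def b_def c_def d_def by simp
  have rec: "u (Suc (Suc k)) = (\<alpha>+\<beta>) * u (Suc k) - \<alpha>*\<beta>* u k" for k
  proof -
    have num: "\<alpha>^(Suc (Suc k)) - \<beta>^(Suc (Suc k)) = (\<alpha>+\<beta>)*(\<alpha>^(Suc k) - \<beta>^(Suc k)) - \<alpha>*\<beta>*(\<alpha>^k - \<beta>^k)"
      by (simp add: algebra_simps)
    show ?thesis unfolding u_def num by (simp add: diff_divide_distrib[symmetric] times_divide_eq_right)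
  qed
  have u0: "u 0 = 0" and u1: "u 1 = 1" unfolding u_def using ab0 by simp_all
  have pw: "mpow M (Suc k) = mat2 (u (Suc k) * a - \<alpha>*\<beta>*u k) (u (Suc k) * b) (u (Suc k) * c) (u (Suc k) * d - \<alpha>*\<beta>*u k)" for k
  proof (induction k)
    case 0 thus ?case unfolding mpow_Suc mpow_0 using u0 u1
      by (simp add: matrix_mul_rid mat_eq2 a_def b_def c_def d_def)
  next
    case (Suc k)
    show ?case unfolding mpow_Suc[of M "Suc k"] Suc.IH mat_eq2 mm_entry mat2_entries rec
      unfolding a_def[symmetric] b_def[symmetric] c_def[symmetric] d_def[symmetric]
      using t dd by (intro conjI; algebra)
  qed
  obtain k where k: "n = Suc k" using n by (cases n) auto
  have un: "u n = 0" unfolding u_def using an bn by simp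
  have uk: "\<alpha>*\<beta>*u k = - l" unfolding u_def using ab0 an bn unfolding k
    by (simp add: field_simps)
  show ?thesis using pw[of k] un uk unfolding k[symmetric] by simp
qed

lemma word_pow: "foldr (**) (concat (replicate n [s1, s2])) (mat 1) = mpow (s1 ** s2) n"
  by (induction n) (auto simp: mpow_Suc mpow_0 matrix_mul_assoc)

(* ---- from G.thy ---- *)
lemma scal_mult: "scal w1 A ** scal w2 B = scal (w1*w2) (A ** B)"
  unfolding mat_eq2 mm_entry scal_entries by (simp add: algebra_simps)

lemma quat_mult: "quat a b c d ** quat a' b' c' d' =
  quat (a*a' - b*b' - c*c' - d*d') (a*b' + b*a' + c*d' - d*c') (a*c' - b*d' + c*a' + d*b') (a*d' + b*c' - c*b' + d*a')"
  unfolding mat_eq2 mm_entry quat_entries by (simp add: complex_eq_iff algebra_simps)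

lemma cis_eq_iff_dvd:
  assumes "Q > 0"
  shows "cis (2*pi*(of_int a / of_int Q)) = 1 \<longleftrightarrow> Q dvd a"
proof
  assume "cis (2*pi*(of_int a / of_int Q)) = 1"
  then obtain n::int where "2*pi*(of_int a / of_int Q) = 2*pi*n" using cis_eq1 by blast
  hence "real_of_int a = of_int Q * of_int n" using assms by (simp add: field_simps)
  hence "a = Q * n" by (metis of_int_eq_iff of_int_mult)
  thus "Q dvd a" by simp
next
  assume "Q dvd a"
  then obtain n where "a = Q*n" by auto
  hence "of_int a / of_int Q = (of_int n :: real)" using assms by simp
  thus "cis (2*pi*(of_int a / of_int Q)) = 1" by simp
qed

lemma pair_scalar:
  assumes n1: "xa^2+xb^2+xc^2+xd^2 = 1" and n2: "ya^2+yb^2+yc^2+yd^2 = 1"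
    and re: "xa*ya - xb*yb - xc*yc - xd*yd = cos (2*pi*(of_int P / of_int Q))"
    and th: "2*pi*ka/ma + 2*pi*kb/mb = 2*pi*(of_int T / of_int Q)"
    and Q: "Q > 0" and h1: "\<not> Q dvd 2*P" and h2: "Q dvd 2*int n*P" and h3: "\<not> Q dvd int d*int n*(T+P)"
    and n: "n > 0"
  shows "mpow (refl_gen ka ma xa xb xc xd ** refl_gen kb mb ya yb yc yd) n
      = mat2 (cis (2*pi*(of_int T / of_int Q + of_int P / of_int Q))^n) 0 0 (cis (2*pi*(of_int T / of_int Q + of_int P / of_int Q))^n)"
   and "(cis (2*pi*(of_int T / of_int Q + of_int P / of_int Q))^n)^d \<noteq> 1"
proof -
  define t where "t = 2*pi*(of_int T / of_int Q)" define x where "x = 2*pi*(of_int P / of_int Q)"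
  define \<alpha> where "\<alpha> = cis (t + x)" define \<beta> where "\<beta> = cis (t - x)"
  have M: "refl_gen ka ma xa xb xc xd ** refl_gen kb mb ya yb yc yd = scal (cis t) (quat (xa*ya - xb*yb - xc*yc - xd*yd) (xa*yb + xb*ya + xc*yd - xd*yc) (xa*yc - xb*yd + xc*ya + xd*yb) (xa*yd + xb*yc - xc*yb + xd*ya))"
    unfolding refl_gen_scal scal_mult quat_mult cis_mult th t_def by simp
  have tr: "tr2 (refl_gen ka ma xa xb xc xd ** refl_gen kb mb ya yb yc yd) = \<alpha> + \<beta>"
    unfolding M tr_sq re x_def[symmetric] \<alpha>_def \<beta>_def
    by (simp add: complex_eq_iff cos_add cos_diff sin_add sin_diff)
  have dt: "det (refl_gen ka ma xa xb xc xd ** refl_gen kb mb ya yb yc yd) = \<alpha> * \<beta>"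
  proof -
    have e: "(2*pi*ka/ma + 2*pi*ka/ma) + (2*pi*kb/mb + 2*pi*kb/mb) = (t+x) + (t-x)" using th unfolding t_def by simp
    have sq: "cis a ^ 2 = cis (a + a)" for a by (simp add: power2_eq_square cis_mult)
    show ?thesis
    unfolding det_mul refl_gen_scal det_sq n1 n2 sq of_real_1 mult_1_right cis_mult e \<alpha>_def \<beta>_def ..
  qed
  have ab: "\<alpha> \<noteq> \<beta>"
  proof
    assume "\<alpha> = \<beta>"
    hence "cis (t+x) / cis (t-x) = 1" unfolding \<alpha>_def \<beta>_def by simp
    hence "cis (2*x) = 1" unfolding cis_divide by (simp add: algebra_simps mult_2)
    hence "cis (2*pi*(of_int (2*P) / of_int Q)) = 1" unfolding x_def by (simp add: algebra_simps)
    thus False using h1 cis_eq_iff_dvd[OF Q] by blast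
  qed
  have "cis (real n * (2 * x)) = 1"
  proof -
    have "real n * (2*x) = 2*pi*(of_int (2*int n*P) / of_int Q)" unfolding x_def by simp
    moreover have "cis (2*pi*(of_int (2*int n*P) / of_int Q)) = 1" using h2 cis_eq_iff_dvd[OF Q] by blast
    ultimately show ?thesis by simp
  qed
  moreover have "\<alpha>^n = cis (real n*(t-x) + real n*(2*x))" unfolding \<alpha>_def Complex.DeMoivre by (simp add: algebra_simps)
  ultimately have abn: "\<alpha>^n = \<beta>^n" unfolding \<beta>_def Complex.DeMoivre by (simp add: cis_mult[symmetric])
  show "mpow (refl_gen ka ma xa xb xc xd ** refl_gen kb mb ya yb yc yd) n
      = mat2 (cis (2*pi*(of_int T / of_int Q + of_int P / of_int Q))^n) 0 0 (cis (2*pi*(of_int T / of_int Q + of_int P / of_int Q))^n)"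
    using power_scalar[OF tr dt ab refl abn[symmetric] n] unfolding \<alpha>_def t_def x_def by (simp add: algebra_simps)
  have "(cis (2*pi*(of_int T / of_int Q + of_int P / of_int Q))^n)^d = cis (2*pi*(of_int (int d*int n*(T+P)) / of_int Q))"
    unfolding power_mult[symmetric] Complex.DeMoivre by (simp add: algebra_simps add_divide_distrib)
  moreover have "cis (2*pi*(of_int (int d*int n*(T+P)) / of_int Q)) \<noteq> 1" using h3 cis_eq_iff_dvd[OF Q] by blast
  ultimately show "(cis (2*pi*(of_int T / of_int Q + of_int P / of_int Q))^n)^d \<noteq> 1" by simp
qed

(* ---- from H.thy ---- *)
lemma sqrt5_sq: "sqrt 5 * sqrt 5 = 5" by simp

lemma cos_pi5: "cos (pi/5) = (1 + sqrt 5)/4"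
proof -
  define c where "c = cos (pi/5)"
  have "cos (3*(pi/5)) = - cos (2*(pi/5))"
  proof -
    have e: "3*(pi/5) = pi - 2*(pi/5)" by simp
    show ?thesis by (subst e) (rule cos_pi_minus)
  qed
  hence "4*c^3 - 3*c = -(2*c^2 - 1)" unfolding c_def cos_treble_cos cos_double_cos .
  hence "(c+1)*(4*c^2 - 2*c - 1) = 0" by (simp add: algebra_simps power3_eq_cube power2_eq_square)
  moreover have "c > 0" unfolding c_def by (rule cos_gt_zero_pi) (use pi_gt_zero in linarith)+
  ultimately have "4*c^2 - 2*c - 1 = 0" by simp
  moreover have "(c - (1 + sqrt 5)/4) * (c - (1 - sqrt 5)/4) = c^2 - c/2 + (1 - sqrt 5 * sqrt 5)/16"
    by (simp add: field_simps power2_eq_square)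
  ultimately have "(c - (1 + sqrt 5)/4) * (c - (1 - sqrt 5)/4) = 0" by simp
  moreover have "c - (1 - sqrt 5)/4 \<noteq> 0"
  proof -
    have "sqrt 5 \<ge> 1" by simp
    hence "(1 - sqrt 5)/4 \<le> 0" by simp
    hence "c - (1 - sqrt 5)/4 > 0" using \<open>c > 0\<close> by linarith
    thus ?thesis by simp
  qed
  ultimately show ?thesis unfolding c_def by simp
qed

lemma tau_sq: "tau * tau = tau + 1"
  unfolding tau_def by (simp add: field_simps)

lemma tau_pos: "tau > 0" unfolding tau_def by (simp add: add_pos_nonneg)

lemma inv2tau: "1/(2*tau) = (tau - 1)/2"
  using tau_sq tau_pos by (simp add: field_simps)

lemma cos_2pi5: "cos (2*pi/5) = 1/(2*tau)"
proof -
  have "cos (2*pi/5) = 2*cos(pi/5)^2 - 1" using cos_double_cos[of "pi/5"] by simp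
  also have "\<dots> = (sqrt 5 - 1)/4" unfolding cos_pi5 by (simp add: power2_eq_square field_simps)
  also have "\<dots> = 1/(2*tau)" unfolding inv2tau unfolding tau_def by simp
  finally show ?thesis .
qed

lemma cos_pi5_tau: "cos (pi/5) = tau/2" unfolding cos_pi5 tau_def by simp

lemma cos_2pi3: "cos (2*pi/3) = -1/2"
proof -
  have e: "2*pi/3 = pi - pi/3" by simp
  show ?thesis by (subst e, subst cos_pi_minus) (simp add: cos_60)
qed

lemma cos_4pi3: "cos (4*pi/3) = -1/2"
proof -
  have e: "4*pi/3 = pi/3 + pi" by simp
  show ?thesis by (subst e, subst cos_periodic_pi) (simp add: cos_60)
qed

lemma cos_pi4: "cos (pi/4) = 1/sqrt 2"
proof -
  have "sqrt 2 / 2 = 1 / sqrt (2::real)" by (simp add: field_simps)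
  thus ?thesis using cos_45 by simp
qed

lemma cos_3pi4: "cos (3*pi/4) = -1/sqrt 2"
proof -
  have e: "3*pi/4 = pi - pi/4" by simp
  show ?thesis by (subst e, subst cos_pi_minus) (simp add: cos_pi4)
qed

lemma cos_6pi5: "cos (6*pi/5) = -tau/2"
proof -
  have e: "6*pi/5 = pi/5 + pi" by simp
  show ?thesis by (subst e, subst cos_periodic_pi) (simp add: cos_pi5_tau)
qed

lemma cos_8pi5: "cos (8*pi/5) = 1/(2*tau)"
proof -
  have e: "8*pi/5 = 2*pi - 2*pi/5" by simp
  show ?thesis by (subst e, subst cos_2pi_minus) (simp add: cos_2pi5)
qed

lemma cos_3pi5: "cos (3*pi/5) = -1/(2*tau)"
proof -
  have e: "3*pi/5 = pi - 2*pi/5" by simp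
  show ?thesis by (subst e, subst cos_pi_minus) (simp add: cos_2pi5)
qed

(* ---- from t/I1.thy ---- *)
lemma det_refl_gen: "a^2+b^2+c^2+d^2 = 1 \<Longrightarrow> det (refl_gen k m a b c d) = cis (2*(2*pi*k/m))"
  unfolding refl_gen_scal det_sq by (simp add: Complex.DeMoivre)

lemma gen_ok:
  assumes "a = cos(2*pi*k/m)" "a^2+b^2+c^2+d^2 = 1" "m > 0" "\<not> (m dvd 2*k)" "m dvd 2*k*e"
  shows "is_reflection (refl_gen k m a b c d) \<and> det (refl_gen k m a b c d) ^ e = 1"
proof
  show "is_reflection (refl_gen k m a b c d)" by (rule refl_gen_refl[OF assms(1-4)])
  obtain q where q: "2*k*e = m*q" using assms(5) by auto
  have "real e * (2*(2*pi*k/m)) = 2*pi*real q"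
  proof -
    have "real e * (2*(2*pi*k/m)) = 2*pi*(real (2*k*e) / m)" by (simp add: field_simps)
    also have "\<dots> = 2*pi*real q" unfolding q using assms(3) by simp
    finally show ?thesis .
  qed
  thus "det (refl_gen k m a b c d) ^ e = 1" unfolding det_refl_gen[OF assms(2)] Complex.DeMoivre
    by simp
qed

lemma cgen_1_3: "cos (2*pi*real (1::nat)/real (3::nat)) = -1/2" using cos_2pi3 by simp
lemma cgen_2_3: "cos (2*pi*real (2::nat)/real (3::nat)) = -1/2"
proof - have e: "2*pi*real (2::nat)/real (3::nat) = 4*pi/3" by simp show ?thesis unfolding e by (rule cos_4pi3) qed
lemma cgen_1_4: "cos (2*pi*real (1::nat)/real (4::nat)) = 0"
proof - have e: "2*pi*real (1::nat)/real (4::nat) = pi/2" by simp show ?thesis unfolding e by simp qed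
lemma cgen_1_8: "cos (2*pi*real (1::nat)/real (8::nat)) = 1/sqrt 2"
proof - have e: "2*pi*real (1::nat)/real (8::nat) = pi/4" by simp show ?thesis unfolding e by (rule cos_pi4) qed
lemma cgen_3_8: "cos (2*pi*real (3::nat)/real (8::nat)) = -1/sqrt 2"
proof - have e: "2*pi*real (3::nat)/real (8::nat) = 3*pi/4" by simp show ?thesis unfolding e by (rule cos_3pi4) qed
lemma cgen_1_5: "cos (2*pi*real (1::nat)/real (5::nat)) = 1/(2*tau)"
proof - have e: "2*pi*real (1::nat)/real (5::nat) = 2*pi/5" by simp show ?thesis unfolding e by (rule cos_2pi5) qed
lemma cgen_4_5: "cos (2*pi*real (4::nat)/real (5::nat)) = 1/(2*tau)"
proof - have e: "2*pi*real (4::nat)/real (5::nat) = 8*pi/5" by simp show ?thesis unfolding e by (rule cos_8pi5) qed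
lemma cgen_3_5: "cos (2*pi*real (3::nat)/real (5::nat)) = -tau/2"
proof - have e: "2*pi*real (3::nat)/real (5::nat) = 6*pi/5" by simp show ?thesis unfolding e by (rule cos_6pi5) qed

lemma cq_1_4: "cos (2*pi*(of_int 1/of_int 4)) = 0"
proof - have e: "2*pi*(of_int 1/of_int 4) = pi/2" by simp show ?thesis unfolding e by simp qed
lemma cq_1_6: "cos (2*pi*(of_int 1/of_int 6)) = 1/2"
proof - have e: "2*pi*(of_int 1/of_int 6) = pi/3" by simp show ?thesis unfolding e by (rule cos_60) qed

lemma i1: "1/(2*tau) = (sqrt 5 - 1)/4"
proof -
  have p: "1 + sqrt 5 > 0" by (simp add: add_pos_nonneg)
  have "(1 + sqrt 5) * (sqrt 5 - 1) = 4" by (simp add: algebra_simps)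
  thus ?thesis unfolding tau_def using p by (simp add: field_simps)
qed
lemma i2: "-1/(2*tau) = (1 - sqrt 5)/4" using i1 by (simp add: field_simps)

(* ---- from t/I2.thy ---- *)
lemma d2_case:
  assumes w: "set w \<subseteq> S" and gens: "\<forall>s\<in>S. is_reflection s \<and> det s ^ 2 = 1"
    and g: "g = foldr (**) w (mat 1)" and dg: "det g = -1" and tg: "tr2 g \<noteq> 0"
  shows "\<exists>g \<in> gen_group S. refl_length (gen_group S) g > codim g"
proof -
  have dS: "\<forall>s\<in>S. det s ^ 2 = 1" using gens by blast
  have "set w \<subseteq> {r \<in> gen_group S. is_reflection r}"
    using w gens by (auto intro: gen_group.intros(2)[OF _ gen_group.one, simplified matrix_mul_rid])
  moreover have "g \<noteq> mat 1" using dg by auto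
  moreover have "\<not> is_reflection g"
  proof
    assume "is_reflection g"
    hence "tr2 g = 1 + det g" by (rule refl_char(1))
    thus False using dg tg by simp
  qed
  moreover have "r1 ** r2 \<noteq> g" if "r1 \<in> gen_group S" "is_reflection r1" "r2 \<in> gen_group S" "is_reflection r2" for r1 r2
  proof
    assume e: "r1 ** r2 = g"
    have m1: "det r \<noteq> 1 \<Longrightarrow> det r ^ 2 = 1 \<Longrightarrow> det r = -1" for r :: cmat2
      using power2_eq_1_iff by blast
    have "det r1 = -1" using m1 refl_char(2)[OF that(2)] det_invariant[OF dS that(1)] by blast
    moreover have "det r2 = -1" using m1 refl_char(2)[OF that(4)] det_invariant[OF dS that(3)] by blast
    moreover have "det g = det r1 * det r2" unfolding e[symmetric] by (rule det_mul)
    ultimately have "det g = 1" by simp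
    thus False using dg by simp
  qed
  ultimately have "refl_length (gen_group S) g > codim g"
    using len_ge3[of w "gen_group S" g] g by blast
  moreover have "g \<in> gen_group S" using w g by (metis word_in_group)
  ultimately show ?thesis by blast
qed

lemma sq5c: "(x::complex) + complex_of_real (sqrt 5) * x = 0 \<longleftrightarrow> x = 0"
proof -
  have "x + complex_of_real (sqrt 5) * x = (1 + complex_of_real (sqrt 5)) * x" by (simp add: algebra_simps)
  moreover have "1 + complex_of_real (sqrt 5) \<noteq> 0"
  proof
    assume "1 + complex_of_real (sqrt 5) = 0"
    hence "Re (1 + complex_of_real (sqrt 5)) = 0" by simp
    hence "1 + sqrt 5 = 0" by simp
    moreover have "sqrt 5 \<ge> 0" by simp
    ultimately show False by linarith
  qed
  ultimately show ?thesis by simp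
qed

(* ---- from t/O1.thy ---- *)
type_synonym qi = "int \<times> int \<times> int \<times> int"

definition sc :: "bool \<Rightarrow> real" where "sc b = (if b then 1/2 else 1/sqrt 2)"

fun Qe :: "bool \<times> qi \<Rightarrow> cmat2" where
  "Qe (b, (x0, x1, x2, x3)) = quat (sc b * of_int x0) (sc b * of_int x1) (sc b * of_int x2) (sc b * of_int x3)"

fun qmi :: "qi \<Rightarrow> qi \<Rightarrow> qi" where
  "qmi (a, b, c, d) (a', b', c', d') =
    (a*a' - b*b' - c*c' - d*d', a*b' + b*a' + c*d' - d*c', a*c' - b*d' + c*a' + d*b', a*d' + b*c' - c*b' + d*a')"

fun evq :: "qi \<Rightarrow> bool" where "evq (a, b, c, d) = (even a \<and> even b \<and> even c \<and> even d)"
fun hq :: "qi \<Rightarrow> qi" where "hq (a, b, c, d) = (a div 2, b div 2, c div 2, d div 2)"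

definition validO :: "bool \<times> qi \<Rightarrow> bool \<times> qi \<Rightarrow> bool" where
  "validO p q = (fst p \<or> fst q \<longrightarrow> evq (qmi (snd p) (snd q)))"

definition mulO :: "bool \<times> qi \<Rightarrow> bool \<times> qi \<Rightarrow> bool \<times> qi" where
  "mulO p q = (fst p = fst q, if fst p \<or> fst q then hq (qmi (snd p) (snd q)) else qmi (snd p) (snd q))"

fun conjO :: "bool \<times> qi \<Rightarrow> bool \<times> qi" where
  "conjO (b, (x0, x1, x2, x3)) = (b, (x0, -x1, -x2, -x3))"

definition Olist :: "(bool \<times> qi) list" where
  "Olist = [
  (True, (- 2, 0, 0, 0)),
  (True, (- 1, - 1, - 1, - 1)),
  (True, (- 1, - 1, - 1, 1)),
  (True, (- 1, - 1, 1, - 1)),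
  (True, (- 1, - 1, 1, 1)),
  (True, (- 1, 1, - 1, - 1)),
  (True, (- 1, 1, - 1, 1)),
  (True, (- 1, 1, 1, - 1)),
  (True, (- 1, 1, 1, 1)),
  (True, (0, - 2, 0, 0)),
  (True, (0, 0, - 2, 0)),
  (True, (0, 0, 0, - 2)),
  (True, (0, 0, 0, 2)),
  (True, (0, 0, 2, 0)),
  (True, (0, 2, 0, 0)),
  (True, (1, - 1, - 1, - 1)),
  (True, (1, - 1, - 1, 1)),
  (True, (1, - 1, 1, - 1)),
  (True, (1, - 1, 1, 1)),
  (True, (1, 1, - 1, - 1)),
  (True, (1, 1, - 1, 1)),
  (True, (1, 1, 1, - 1)),
  (True, (1, 1, 1, 1)),
  (True, (2, 0, 0, 0)),
  (False, (- 1, - 1, 0, 0)),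
  (False, (- 1, 0, - 1, 0)),
  (False, (- 1, 0, 0, - 1)),
  (False, (- 1, 0, 0, 1)),
  (False, (- 1, 0, 1, 0)),
  (False, (- 1, 1, 0, 0)),
  (False, (0, - 1, - 1, 0)),
  (False, (0, - 1, 0, - 1)),
  (False, (0, - 1, 0, 1)),
  (False, (0, - 1, 1, 0)),
  (False, (0, 0, - 1, - 1)),
  (False, (0, 0, - 1, 1)),
  (False, (0, 0, 1, - 1)),
  (False, (0, 0, 1, 1)),
  (False, (0, 1, - 1, 0)),
  (False, (0, 1, 0, - 1)),
  (False, (0, 1, 0, 1)),
  (False, (0, 1, 1, 0)),
  (False, (1, - 1, 0, 0)),
  (False, (1, 0, - 1, 0)),
  (False, (1, 0, 0, - 1)),
  (False, (1, 0, 0, 1)),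
  (False, (1, 0, 1, 0)),
  (False, (1, 1, 0, 0))
]"

lemma sqrt2_sq: "sqrt 2 * sqrt 2 = (2::real)" by simp

lemma half_even: "even (z::int) \<Longrightarrow> real_of_int (z div 2) = real_of_int z / 2"
  by (auto elim!: evenE)

lemma Qe_mult_raw:
  "Qe (b, (x0, x1, x2, x3)) ** Qe (c, (y0, y1, y2, y3)) =
   (case qmi (x0, x1, x2, x3) (y0, y1, y2, y3) of (z0, z1, z2, z3) \<Rightarrow>
     quat (sc b * sc c * of_int z0) (sc b * sc c * of_int z1) (sc b * sc c * of_int z2) (sc b * sc c * of_int z3))"
  unfolding Qe.simps quat_mult qmi.simps by (simp add: algebra_simps)

lemma sc_prod: "sc b * sc c * z = sc (b = c) * (if b \<or> c then z / 2 else z)"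
  by (cases b; cases c) (simp_all add: sc_def field_simps)

lemma Qe_mult:
  assumes "validO p q"
  shows "Qe p ** Qe q = Qe (mulO p q)"
proof -
  obtain b x0 x1 x2 x3 where p: "p = (b, (x0, x1, x2, x3))" by (cases p) auto
  obtain c y0 y1 y2 y3 where q: "q = (c, (y0, y1, y2, y3))" by (cases q) auto
  obtain z0 z1 z2 z3 where z: "qmi (x0, x1, x2, x3) (y0, y1, y2, y3) = (z0, z1, z2, z3)" by (cases "qmi (x0, x1, x2, x3) (y0, y1, y2, y3)") auto
  show ?thesis
  proof (cases "b \<or> c")
    case True
    hence "evq (qmi (x0, x1, x2, x3) (y0, y1, y2, y3))" using assms unfolding validO_def p q fst_conv snd_conv by blast
    hence ev: "even z0" "even z1" "even z2" "even z3" unfolding z evq.simps by simp_all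
    show ?thesis unfolding p q Qe_mult_raw mulO_def fst_conv snd_conv z using True ev by (simp add: sc_prod half_even)
  next
    case False
    thus ?thesis unfolding p q Qe_mult_raw mulO_def fst_conv snd_conv z by (simp add: sc_prod)
  qed
qed

(* ---- from t/O2.thy ---- *)
definition OG :: "int \<Rightarrow> cmat2 set" where
  "OG N = {scal (cis (2*pi*(of_int j/of_int N))) (Qe p) | j p. 0 \<le> j \<and> j < N \<and> p \<in> set Olist \<and> fst p = even j}"

lemma even_mod: "even (N::int) \<Longrightarrow> even (a mod N) \<longleftrightarrow> even a"
proof -
  assume "even N"
  have "a = N * (a div N) + a mod N" by simp
  thus ?thesis using \<open>even N\<close> by (metis even_add even_mult_iff)
qed
lemma cis_mod: "N > 0 \<Longrightarrow> cis (2*pi*(of_int (a mod N)/of_int N)) = cis (2*pi*(of_int a/of_int N))"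
proof -
  assume N: "N > 0"
  have e: "real_of_int a = of_int N * of_int (a div N) + of_int (a mod N)"
    by (metis mult_div_mod_eq of_int_add of_int_mult)
  have "2*pi*(of_int a/of_int N) = 2*pi*(of_int (a mod N)/of_int N) + 2*pi* of_int (a div N)"
    unfolding e using N by (simp add: field_simps)
  thus ?thesis by (simp add: cis_mult[symmetric])
qed

lemma scal_Qe_mult:
  "validO p q \<Longrightarrow> scal (cis x) (Qe p) ** scal (cis y) (Qe q) = scal (cis (x+y)) (Qe (mulO p q))"
  by (simp add: scal_mult Qe_mult cis_mult)

lemma OG_step:
  assumes N: "N > 0" "even N" and q0: "\<forall>p\<in>set Olist. validO q0 p \<and> mulO q0 p \<in> set Olist"
    and par: "fst q0 = even j0" and X: "X \<in> OG N"
  shows "scal (cis (2*pi*(of_int j0/of_int N))) (Qe q0) ** X \<in> OG N"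
proof -
  obtain j p where X: "X = scal (cis (2*pi*(of_int j/of_int N))) (Qe p)" "0 \<le> j" "j < N" "p \<in> set Olist" "fst p = even j"
    using X unfolding OG_def by blast
  have v: "validO q0 p" and m: "mulO q0 p \<in> set Olist" using q0 X(4) by auto
  have "scal (cis (2*pi*(of_int j0/of_int N))) (Qe q0) ** X = scal (cis (2*pi*(of_int (j0+j)/of_int N))) (Qe (mulO q0 p))"
    unfolding X(1) scal_Qe_mult[OF v] by (simp add: add_divide_distrib algebra_simps)
  also have "\<dots> = scal (cis (2*pi*(of_int ((j0+j) mod N)/of_int N))) (Qe (mulO q0 p))"
    using cis_mod[OF N(1)] by simp
  finally have e: "scal (cis (2*pi*(of_int j0/of_int N))) (Qe q0) ** X = scal (cis (2*pi*(of_int ((j0+j) mod N)/of_int N))) (Qe (mulO q0 p))" .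
  have "fst (mulO q0 p) = even ((j0+j) mod N)" unfolding even_mod[OF N(2)] mulO_def using par X(5) by auto
  moreover have "0 \<le> (j0+j) mod N" "(j0+j) mod N < N" using N by auto
  ultimately show ?thesis unfolding e OG_def using m by blast
qed

definition goodgen :: "bool \<times> qi \<Rightarrow> bool" where
  "goodgen q0 = (list_all (\<lambda>p. validO q0 p \<and> mulO q0 p \<in> set Olist \<and> validO (conjO q0) p \<and> mulO (conjO q0) p \<in> set Olist) Olist
      \<and> validO q0 (conjO q0) \<and> mulO q0 (conjO q0) = (True, (2, 0, 0, 0)))"

lemma Qe_one: "Qe (True, (2, 0, 0, 0)) = mat 1"
  unfolding mat_eq2 mat1_entries by (simp add: sc_def complex_eq_iff)

lemma fst_conjO: "fst (conjO p) = fst p" by (cases p) auto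

lemma gen_sub_OG:
  assumes N: "N > 0" "even N"
    and S: "\<forall>s\<in>S. \<exists>j0 q0. s = scal (cis (2*pi*(of_int j0/of_int N))) (Qe q0) \<and> fst q0 = even j0 \<and> goodgen q0"
    and one_in: "(True, (2, 0, 0, 0)) \<in> set Olist"
  shows "gen_group S \<subseteq> OG N"
proof
  fix g assume "g \<in> gen_group S"
  thus "g \<in> OG N"
  proof (induction rule: gen_group.induct)
    case one
    have "mat 1 = scal (cis (2*pi*(of_int 0/of_int N))) (Qe (True, (2, 0, 0, 0)))"
      unfolding Qe_one by (simp add: mat_eq2 mat1_entries)
    thus ?case unfolding OG_def using N one_in by force
  next
    case (mul s g)
    then obtain j0 q0 where s: "s = scal (cis (2*pi*(of_int j0/of_int N))) (Qe q0)" "fst q0 = even j0" "goodgen q0"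
      using S by blast
    have "\<forall>p\<in>set Olist. validO q0 p \<and> mulO q0 p \<in> set Olist" using s(3) unfolding goodgen_def list_all_iff by blast
    thus ?case unfolding s(1) using OG_step[OF N _ s(2) mul.IH] by blast
  next
    case (mul_inv s t g)
    then obtain j0 q0 where s: "s = scal (cis (2*pi*(of_int j0/of_int N))) (Qe q0)" "fst q0 = even j0" "goodgen q0"
      using S by blast
    let ?t = "scal (cis (2*pi*(of_int (-j0)/of_int N))) (Qe (conjO q0))"
    have v: "validO q0 (conjO q0)" and mm: "mulO q0 (conjO q0) = (True, (2, 0, 0, 0))" using s(3) unfolding goodgen_def by auto
    have "s ** ?t = mat 1" unfolding s(1) scal_Qe_mult[OF v] mm Qe_one
      by (simp add: mat_eq2 mat1_entries)
    have "t = t ** (s ** ?t)" unfolding \<open>s ** ?t = mat 1\<close> by (simp add: matrix_mul_rid)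
    also have "\<dots> = (t ** s) ** ?t" by (simp add: matrix_mul_assoc)
    also have "\<dots> = ?t" unfolding mul_inv(2) by (simp add: matrix_mul_lid)
    finally have "t = ?t" .
    moreover have "\<forall>p\<in>set Olist. validO (conjO q0) p \<and> mulO (conjO q0) p \<in> set Olist" using s(3) unfolding goodgen_def list_all_iff by blast
    moreover have "fst (conjO q0) = even (-j0)" using s(2) fst_conjO by simp
    ultimately show ?case using OG_step[OF N _ _ mul_inv.IH] by blast
  qed
qed

(* ---- from t/O3.thy ---- *)
fun angf :: "bool \<Rightarrow> int \<Rightarrow> int" where
  "angf True x = (if x = 2 then 0 else if x = 1 then 4 else if x = 0 then 6 else if x = -1 then 8 else 12)"
| "angf False x = (if x = 1 then 3 else if x = 0 then 6 else 9)"

fun okx :: "bool \<Rightarrow> int \<Rightarrow> bool" where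
  "okx True x = (-2 \<le> x \<and> x \<le> 2)"
| "okx False x = (-1 \<le> x \<and> x \<le> 1)"

fun x0of :: "bool \<times> qi \<Rightarrow> int" where "x0of (b, (x0, x1, x2, x3)) = x0"
definition ang :: "bool \<times> qi \<Rightarrow> int" where "ang p = angf (fst p) (x0of p)"

lemma c24: "cos (2*pi*(of_int 0/24)) = 1" "cos (2*pi*(of_int 3/24)) = 1/sqrt 2"
  "cos (2*pi*(of_int 4/24)) = 1/2" "cos (2*pi*(of_int 6/24)) = 0" "cos (2*pi*(of_int 8/24)) = -1/2"
  "cos (2*pi*(of_int 9/24)) = -1/sqrt 2" "cos (2*pi*(of_int 12/24)) = -1"
proof -
  show "cos (2*pi*(of_int 0/24)) = 1" by simp
  have e: "2*pi*(of_int 3/24) = pi/4" by simp show "cos (2*pi*(of_int 3/24)) = 1/sqrt 2" unfolding e by (rule cos_pi4)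
  have e: "2*pi*(of_int 4/24) = pi/3" by simp show "cos (2*pi*(of_int 4/24)) = 1/2" unfolding e by (rule cos_60)
  have e: "2*pi*(of_int 6/24) = pi/2" by simp show "cos (2*pi*(of_int 6/24)) = 0" unfolding e by simp
  have e: "2*pi*(of_int 8/24) = 2*pi/3" by simp show "cos (2*pi*(of_int 8/24)) = -1/2" unfolding e by (rule cos_2pi3)
  have e: "2*pi*(of_int 9/24) = 3*pi/4" by simp show "cos (2*pi*(of_int 9/24)) = -1/sqrt 2" unfolding e by (rule cos_3pi4)
  have e: "2*pi*(of_int 12/24) = pi" by simp show "cos (2*pi*(of_int 12/24)) = -1" unfolding e by simp
qed

lemma ang_ok: "okx b x \<Longrightarrow> sc b * of_int x = cos (2*pi*(of_int (angf b x)/24))"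
proof (cases b)
  case True
  assume "okx b x"
  hence "x = -2 \<or> x = -1 \<or> x = 0 \<or> x = 1 \<or> x = 2" using True by auto
  thus ?thesis using True c24 by (auto simp: sc_def)
next
  case False
  assume "okx b x"
  hence "x = -1 \<or> x = 0 \<or> x = 1" using False by auto
  thus ?thesis using False c24 by (auto simp: sc_def)
qed

definition cm :: "int \<Rightarrow> int \<Rightarrow> bool" where "cm a c = (24 dvd (a - c) \<or> 24 dvd (a + c))"

lemma cos_eq_cm:
  assumes "cos (2*pi*(of_int a/24)) = cos (2*pi*(of_int c/24))"
  shows "cm a c"
proof -
  let ?w = "2*pi*(of_int a/24)" and ?z = "2*pi*(of_int c/24)"
  have "2 * sin ((?w + ?z) / 2) * sin ((?z - ?w) / 2) = 0" using assms cos_diff_cos[of ?w ?z] by simp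
  hence "sin ((?w + ?z) / 2) = 0 \<or> sin ((?z - ?w) / 2) = 0" by simp
  thus ?thesis
  proof
    assume "sin ((?w + ?z) / 2) = 0"
    then obtain i::int where "(?w + ?z)/2 = of_int i * pi" using sin_zero_iff_int2 by blast
    hence "pi * real_of_int (a + c) = pi * of_int (24*i)" by (simp add: field_simps)
    hence "real_of_int (a + c) = of_int (24*i)" by simp
    hence "a + c = 24*i" by (metis of_int_eq_iff)
    thus ?thesis unfolding cm_def by simp
  next
    assume "sin ((?z - ?w) / 2) = 0"
    then obtain i::int where "(?z - ?w)/2 = of_int i * pi" using sin_zero_iff_int2 by blast
    hence "pi * real_of_int (c - a) = pi * of_int (24*i)" by (simp add: field_simps)
    hence "real_of_int (c - a) = of_int (24*i)" by simp
    hence "c - a = 24*i" by (metis of_int_eq_iff)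
    hence "a - c = 24*(-i)" by simp
    thus ?thesis unfolding cm_def by (metis dvd_triv_left)
  qed
qed

fun sqn :: "qi \<Rightarrow> int" where "sqn (a, b, c, d) = a*a + b*b + c*c + d*d"
definition okO :: "bool \<times> qi \<Rightarrow> bool" where
  "okO p = (sqn (snd p) = (if fst p then 4 else 2) \<and> okx (fst p) (x0of p))"

lemma okO_all: "list_all okO Olist"
  by (simp add: Olist_def okO_def)

lemma det_Qe: "okO p \<Longrightarrow> det (scal w (Qe p)) = w^2"
proof -
  assume o: "okO p"
  obtain b x0 x1 x2 x3 where p: "p = (b, (x0, x1, x2, x3))" by (cases p) auto
  have s: "x0*x0 + x1*x1 + x2*x2 + x3*x3 = (if b then 4 else 2)" using o unfolding okO_def p by simp
  have "(sc b * of_int x0)^2 + (sc b * of_int x1)^2 + (sc b * of_int x2)^2 + (sc b * of_int x3)^2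
        = sc b ^ 2 * of_int (x0*x0 + x1*x1 + x2*x2 + x3*x3)" by (simp add: algebra_simps power2_eq_square)
  also have "\<dots> = 1" unfolding s by (cases b) (simp_all add: sc_def power2_eq_square)
  finally show ?thesis unfolding p Qe.simps det_sq by simp
qed

lemma tr_Qe: "tr2 (scal w (Qe p)) = w * (2 * (sc (fst p) * of_int (x0of p)))"
  by (cases p) (auto simp: tr_sq)

lemma refl_O:
  assumes o: "okO p" and r: "is_reflection (scal (cis \<theta>) (Qe p))"
  shows "sc (fst p) * of_int (x0of p) = cos \<theta>" "cis (2*\<theta>) \<noteq> 1"
proof -
  let ?v = "sc (fst p) * of_int (x0of p)"
  have d: "det (scal (cis \<theta>) (Qe p)) = cis (2*\<theta>)" unfolding det_Qe[OF o] by (simp add: power2_eq_square cis_mult)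
  have "cis \<theta> * (2 * ?v) = 1 + cis (2*\<theta>)" using refl_char(1)[OF r] unfolding tr_Qe d .
  hence "cis (-\<theta>) * (cis \<theta> * (2 * ?v)) = cis (-\<theta>) * (1 + cis (2*\<theta>))" by simp
  moreover have "cis (-\<theta>) * (cis \<theta> * (2 * ?v)) = 2 * ?v"
  proof -
    have "cis (-\<theta>) * cis \<theta> = 1" by (simp add: cis_mult)
    thus ?thesis by (metis mult.assoc mult_1)
  qed
  moreover have "cis (-\<theta>) * (1 + cis (2*\<theta>)) = cis (-\<theta>) + cis \<theta>"
    by (simp add: distrib_left cis_mult)
  ultimately have "2 * complex_of_real ?v = cis (-\<theta>) + cis \<theta>" by simp
  hence "Re (2 * complex_of_real ?v) = Re (cis (-\<theta>) + cis \<theta>)" by simp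
  thus "?v = cos \<theta>" by simp
  show "cis (2*\<theta>) \<noteq> 1" using refl_char(2)[OF r] d by simp
qed

(* ---- from t/O4.thy ---- *)
fun x23 :: "bool \<times> qi \<Rightarrow> bool" where "x23 (b, (x0, x1, x2, x3)) = (x2 \<noteq> 0 \<or> x3 \<noteq> 0)"

definition checkO :: "int \<Rightarrow> int \<Rightarrow> bool \<times> qi \<Rightarrow> bool" where
  "checkO N jg qg = (let f = 24 div N in
    x23 qg \<and> qg \<in> set Olist \<and> \<not> (cm (jg*f) (ang qg) \<and> \<not> N dvd 2*jg) \<and>
    list_all (\<lambda>j1. list_all (\<lambda>q1. (fst q1 = even j1 \<and> cm (j1*f) (ang q1) \<and> \<not> N dvd 2*j1) \<longrightarrow>
       (validO (conjO q1) qg \<and> mulO (conjO q1) qg \<in> set Olist \<and>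
        \<not> (cm ((jg - j1)*f) (ang (mulO (conjO q1) qg)) \<and> \<not> N dvd 2*(jg - j1)))) Olist) [0..N-1])"

lemma conj_all: "list_all (\<lambda>q. validO (conjO q) q \<and> mulO (conjO q) q = (True, (2, 0, 0, 0))) Olist"
  by (simp add: Olist_def validO_def mulO_def)

lemma okO_mem: "q \<in> set Olist \<Longrightarrow> okO q" using okO_all by (simp add: list_all_iff)

lemma conv24:
  assumes N: "N > 0" "N dvd (24::int)"
  shows "of_int j / of_int N = (of_int (j * (24 div N)) / 24 :: real)"
proof -
  have i: "N * (24 div N) = 24" using N by simp
  hence h: "real_of_int N * real_of_int (24 div N) = 24" by (metis of_int_mult of_int_numeral)
  have nz: "real_of_int (24 div N) \<noteq> 0" using h by auto
  have "(of_int (j * (24 div N)) / 24 :: real) = of_int j * of_int (24 div N) / (of_int N * of_int (24 div N))"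
    unfolding h by simp
  also have "\<dots> = of_int j / of_int N" using nz by simp
  finally show ?thesis by simp
qed

lemma refl_cm:
  assumes N: "N > 0" "N dvd 24" and q: "q \<in> set Olist"
    and r: "is_reflection (scal (cis (2*pi*(of_int j/of_int N))) (Qe q))"
  shows "cm (j * (24 div N)) (ang q) \<and> \<not> N dvd 2*j"
proof
  have o: "okO q" using okO_mem[OF q] .
  have ox: "okx (fst q) (x0of q)" using o unfolding okO_def by simp
  have e: "of_int j / of_int N = (of_int (j * (24 div N)) / 24 :: real)" by (rule conv24[OF N])
  have "cos (2*pi*(of_int (j * (24 div N))/24)) = cos (2*pi*(of_int (ang q)/24))"
    using refl_O(1)[OF o r] ang_ok[OF ox] unfolding e ang_def by simp
  thus "cm (j * (24 div N)) (ang q)" by (rule cos_eq_cm)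
  have "cis (2*(2*pi*(of_int j/of_int N))) \<noteq> 1" using refl_O(2)[OF o r] .
  moreover have "2*(2*pi*(of_int j/of_int N)) = 2*pi*(of_int (2*j)/of_int N)" by simp
  ultimately have "cis (2*pi*(of_int (2*j)/of_int N)) \<noteq> 1" by simp
  thus "\<not> N dvd 2*j" using cis_eq_iff_dvd[OF N(1), of "2*j"] by blast
qed

lemma O_case:
  assumes N: "N > 0" "even N" "N dvd 24"
    and S: "\<forall>s\<in>S. \<exists>j0 q0. s = scal (cis (2*pi*(of_int j0/of_int N))) (Qe q0) \<and> fst q0 = even j0 \<and> goodgen q0"
    and Sr: "\<forall>s\<in>S. is_reflection s"
    and w: "set w \<subseteq> S" and g: "g = foldr (**) w (mat 1)"
    and gf: "g = scal (cis (2*pi*(of_int jg/of_int N))) (Qe qg)" and chk: "checkO N jg qg"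
  shows "\<exists>g \<in> gen_group S. refl_length (gen_group S) g > codim g"
proof -
  define f where "f = 24 div N"
  have one_in: "(True, (2, 0, 0, 0)) \<in> set Olist" by (simp add: Olist_def)
  have sub: "gen_group S \<subseteq> OG N" by (rule gen_sub_OG[OF N(1,2) S one_in])
  have ck: "x23 qg" "qg \<in> set Olist" "\<not> (cm (jg*f) (ang qg) \<and> \<not> N dvd 2*jg)"
     "\<And>j1 q1. j1 \<in> set [0..N-1] \<Longrightarrow> q1 \<in> set Olist \<Longrightarrow> fst q1 = even j1 \<Longrightarrow> cm (j1*f) (ang q1) \<Longrightarrow> \<not> N dvd 2*j1 \<Longrightarrow>
       validO (conjO q1) qg \<and> mulO (conjO q1) qg \<in> set Olist \<and>
        \<not> (cm ((jg - j1)*f) (ang (mulO (conjO q1) qg)) \<and> \<not> N dvd 2*(jg - j1))"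
    using chk unfolding checkO_def Let_def f_def list_all_iff by blast+
  have "set w \<subseteq> {r \<in> gen_group S. is_reflection r}"
    using w Sr by (auto intro: gen_group.intros(2)[OF _ gen_group.one, simplified matrix_mul_rid])
  moreover have "g \<noteq> mat 1"
  proof
    assume "g = mat 1"
    hence "g$1$2 = 0" by (simp add: mat1_entries)
    moreover obtain b x0 x1 x2 x3 where qg: "qg = (b, (x0, x1, x2, x3))" by (cases qg) auto
    ultimately have "cis (2*pi*(of_int jg/of_int N)) * Complex (sc b * of_int x2) (sc b * of_int x3) = 0"
      unfolding gf qg by simp
    hence "Complex (sc b * of_int x2) (sc b * of_int x3) = 0" using cis_neq_zero by (simp only: mult_eq_0_iff) blast
    hence "sc b * of_int x2 = 0" "sc b * of_int x3 = 0" by (simp_all add: complex_eq_iff)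
    moreover have "sc b \<noteq> 0" by (simp add: sc_def)
    ultimately have "x2 = 0" "x3 = 0" by simp_all
    thus False using ck(1) unfolding qg by simp
  qed
  moreover have "\<not> is_reflection g"
  proof
    assume "is_reflection g"
    thus False using refl_cm[OF N(1,3) ck(2)] gf ck(3) unfolding f_def by blast
  qed
  moreover have "r1 ** r2 \<noteq> g" if r: "r1 \<in> gen_group S" "is_reflection r1" "r2 \<in> gen_group S" "is_reflection r2" for r1 r2
  proof
    assume e: "r1 ** r2 = g"
    obtain j1 q1 where r1: "r1 = scal (cis (2*pi*(of_int j1/of_int N))) (Qe q1)" "0 \<le> j1" "j1 < N" "q1 \<in> set Olist" "fst q1 = even j1"
      using sub r(1) unfolding OG_def by blast
    have c1: "cm (j1*f) (ang q1) \<and> \<not> N dvd 2*j1" using refl_cm[OF N(1,3) r1(4)] r(2) r1(1) unfolding f_def by blast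
    have jm: "j1 \<in> set [0..N-1]" using r1(2,3) by simp
    have v: "validO (conjO q1) qg" and m: "mulO (conjO q1) qg \<in> set Olist"
      and nc: "\<not> (cm ((jg - j1)*f) (ang (mulO (conjO q1) qg)) \<and> \<not> N dvd 2*(jg - j1))"
      using ck(4)[OF jm r1(4) r1(5)] c1 by blast+
    let ?r1' = "scal (cis (2*pi*(of_int (-j1)/of_int N))) (Qe (conjO q1))"
    have ci: "validO (conjO q1) q1 \<and> mulO (conjO q1) q1 = (True, (2, 0, 0, 0))"
      using conj_all r1(4) by (simp add: list_all_iff)
    have inv: "?r1' ** r1 = mat 1" unfolding r1(1) scal_Qe_mult[OF ci[THEN conjunct1]] ci[THEN conjunct2] Qe_one
      by (simp add: mat_eq2 mat1_entries)
    have "r2 = ?r1' ** g" unfolding e[symmetric] matrix_mul_assoc inv by (simp add: matrix_mul_lid)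
    also have "\<dots> = scal (cis (2*pi*(of_int (jg - j1)/of_int N))) (Qe (mulO (conjO q1) qg))"
      unfolding gf scal_Qe_mult[OF v] by (simp add: algebra_simps diff_divide_distrib)
    finally have "is_reflection (scal (cis (2*pi*(of_int (jg - j1)/of_int N))) (Qe (mulO (conjO q1) qg)))" using r(4) by simp
    hence "cm ((jg - j1) * f) (ang (mulO (conjO q1) qg)) \<and> \<not> N dvd 2*(jg - j1)"
      using refl_cm[OF N(1,3) m] unfolding f_def by blast
    thus False using nc by blast
  qed
  ultimately have "refl_length (gen_group S) g > codim g"
    using len_ge3[of w "gen_group S" g] g by blast
  moreover have "g \<in> gen_group S" using w g by (metis word_in_group)
  ultimately show ?thesis by blast
qed

lemma scal_Qe_step:
  "validO p q \<Longrightarrow> mulO p q = r \<Longrightarrow> x + y = z \<Longrightarrow> scal (cis x) (Qe p) ** scal (cis y) (Qe q) = scal (cis z) (Qe r)"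
  using scal_Qe_mult by blast

lemma foldr_step: "foldr (**) (a # rest) (mat 1) = a ** foldr (**) rest (mat 1)" by simp

(* ---- from t/J.thy ---- *)
lemma ST4_gens: "ST_gens_list ! (4-4) = [refl_gen 1 3 (-1/2) (1/2) (-1/2) (-1/2), refl_gen 1 3 (-1/2) (1/2) (1/2) (1/2), refl_gen 2 3 (-1/2) (1/2) (-1/2) (1/2)]"
  by (simp add: ST_gens_list_def)

lemma G4: "\<exists>g \<in> ST_group 4. refl_length (ST_group 4) g > codim g"
proof -
  have g0: "is_reflection (refl_gen 1 3 (-1/2) (1/2) (-1/2) (-1/2)) \<and> det (refl_gen 1 3 (-1/2) (1/2) (-1/2) (-1/2)) ^ 3 = 1"
    by (rule gen_ok, rule cgen_1_3[symmetric]) ((simp_all only: i1 i2)?, simp_all add: power2_eq_square, (simp_all only: tau_def)?, (simp_all add: field_simps power2_eq_square)?)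
  have g1: "is_reflection (refl_gen 1 3 (-1/2) (1/2) (1/2) (1/2)) \<and> det (refl_gen 1 3 (-1/2) (1/2) (1/2) (1/2)) ^ 3 = 1"
    by (rule gen_ok, rule cgen_1_3[symmetric]) ((simp_all only: i1 i2)?, simp_all add: power2_eq_square, (simp_all only: tau_def)?, (simp_all add: field_simps power2_eq_square)?)
  have g2: "is_reflection (refl_gen 2 3 (-1/2) (1/2) (-1/2) (1/2)) \<and> det (refl_gen 2 3 (-1/2) (1/2) (-1/2) (1/2)) ^ 3 = 1"
    by (rule gen_ok, rule cgen_2_3[symmetric]) ((simp_all only: i1 i2)?, simp_all add: power2_eq_square, (simp_all only: tau_def)?, (simp_all add: field_simps power2_eq_square)?)
  have gens: "\<forall>s\<in>set (ST_gens_list ! (4-4)). is_reflection s \<and> det s ^ 3 = 1"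
    unfolding ST4_gens using g0 g1 g2 by auto
  have cv: "cos (2*pi*(of_int 1 / of_int 4)) = 0"
  proof -
    have e: "2*pi*(of_int 1 / of_int 4) = pi/2" by simp
    show ?thesis unfolding e by (simp add: cos_pi_half)
  qed
  have P: "mpow ((refl_gen 1 3 (-1/2) (1/2) (-1/2) (-1/2)) ** (refl_gen 2 3 (-1/2) (1/2) (-1/2) (1/2))) 2 = mat2 (cis (2*pi*(of_int 4 / of_int 4 + of_int 1 / of_int 4))^2) 0 0 (cis (2*pi*(of_int 4 / of_int 4 + of_int 1 / of_int 4))^2)"
    by (rule pair_scalar(1)[where P=1 and Q=4 and T=4 and n=2 and d=3 and ka=1 and ma=3 and kb=2 and mb=3 and xa="-1/2" and xb="1/2" and xc="-1/2" and xd="-1/2" and ya="-1/2" and yb="1/2" and yc="-1/2" and yd="1/2"]) (use cv in \<open>((simp_all only: i1 i2)?, simp_all add: power2_eq_square, (simp_all only: tau_def)?, (simp_all add: field_simps power2_eq_square)?)\<close>)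
  have L: "(cis (2*pi*(of_int 4 / of_int 4 + of_int 1 / of_int 4))^2)^3 \<noteq> 1"
    by (rule pair_scalar(2)[where P=1 and Q=4 and T=4 and n=2 and d=3 and ka=1 and ma=3 and kb=2 and mb=3 and xa="-1/2" and xb="1/2" and xc="-1/2" and xd="-1/2" and ya="-1/2" and yb="1/2" and yc="-1/2" and yd="1/2"]) (use cv in \<open>((simp_all only: i1 i2)?, simp_all add: power2_eq_square, (simp_all only: tau_def)?, (simp_all add: field_simps power2_eq_square)?)\<close>)
  show ?thesis unfolding ST_group_def
    apply (rule scalar_case[where w="concat (replicate 2 [refl_gen 1 3 (-1/2) (1/2) (-1/2) (-1/2), refl_gen 2 3 (-1/2) (1/2) (-1/2) (1/2)])" and d=3, OF _ _ _ _ L])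
    using gens P unfolding word_pow ST4_gens by auto
qed

lemma ST5_gens: "ST_gens_list ! (5-4) = [refl_gen 2 3 (-1/2) (-1/2) (-1/2) (-1/2), refl_gen 2 3 (-1/2) (1/2) (-1/2) (-1/2)]"
  by (simp add: ST_gens_list_def)

lemma G5: "\<exists>g \<in> ST_group 5. refl_length (ST_group 5) g > codim g"
proof -
  have g0: "is_reflection (refl_gen 2 3 (-1/2) (-1/2) (-1/2) (-1/2)) \<and> det (refl_gen 2 3 (-1/2) (-1/2) (-1/2) (-1/2)) ^ 3 = 1"
    by (rule gen_ok, rule cgen_2_3[symmetric]) ((simp_all only: i1 i2)?, simp_all add: power2_eq_square, (simp_all only: tau_def)?, (simp_all add: field_simps power2_eq_square)?)
  have g1: "is_reflection (refl_gen 2 3 (-1/2) (1/2) (-1/2) (-1/2)) \<and> det (refl_gen 2 3 (-1/2) (1/2) (-1/2) (-1/2)) ^ 3 = 1"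
    by (rule gen_ok, rule cgen_2_3[symmetric]) ((simp_all only: i1 i2)?, simp_all add: power2_eq_square, (simp_all only: tau_def)?, (simp_all add: field_simps power2_eq_square)?)
  have gens: "\<forall>s\<in>set (ST_gens_list ! (5-4)). is_reflection s \<and> det s ^ 3 = 1"
    unfolding ST5_gens using g0 g1 by auto
  have cv: "cos (2*pi*(of_int 3 / of_int 12)) = 0"
  proof -
    have e: "2*pi*(of_int 3 / of_int 12) = pi/2" by simp
    show ?thesis unfolding e by (simp add: cos_pi_half)
  qed
  have P: "mpow ((refl_gen 2 3 (-1/2) (-1/2) (-1/2) (-1/2)) ** (refl_gen 2 3 (-1/2) (1/2) (-1/2) (-1/2))) 2 = mat2 (cis (2*pi*(of_int 16 / of_int 12 + of_int 3 / of_int 12))^2) 0 0 (cis (2*pi*(of_int 16 / of_int 12 + of_int 3 / of_int 12))^2)"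
    by (rule pair_scalar(1)[where P=3 and Q=12 and T=16 and n=2 and d=3 and ka=2 and ma=3 and kb=2 and mb=3 and xa="-1/2" and xb="-1/2" and xc="-1/2" and xd="-1/2" and ya="-1/2" and yb="1/2" and yc="-1/2" and yd="-1/2"]) (use cv in \<open>((simp_all only: i1 i2)?, simp_all add: power2_eq_square, (simp_all only: tau_def)?, (simp_all add: field_simps power2_eq_square)?)\<close>)
  have L: "(cis (2*pi*(of_int 16 / of_int 12 + of_int 3 / of_int 12))^2)^3 \<noteq> 1"
    by (rule pair_scalar(2)[where P=3 and Q=12 and T=16 and n=2 and d=3 and ka=2 and ma=3 and kb=2 and mb=3 and xa="-1/2" and xb="-1/2" and xc="-1/2" and xd="-1/2" and ya="-1/2" and yb="1/2" and yc="-1/2" and yd="-1/2"]) (use cv in \<open>((simp_all only: i1 i2)?, simp_all add: power2_eq_square, (simp_all only: tau_def)?, (simp_all add: field_simps power2_eq_square)?)\<close>)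
  show ?thesis unfolding ST_group_def
    apply (rule scalar_case[where w="concat (replicate 2 [refl_gen 2 3 (-1/2) (-1/2) (-1/2) (-1/2), refl_gen 2 3 (-1/2) (1/2) (-1/2) (-1/2)])" and d=3, OF _ _ _ _ L])
    using gens P unfolding word_pow ST5_gens by auto
qed

lemma ST6_gens: "ST_gens_list ! (6-4) = [refl_gen 1 4 (0) (0) (0) (1), refl_gen 1 3 (-1/2) (-1/2) (-1/2) (-1/2)]"
  by (simp add: ST_gens_list_def)

lemma G6: "\<exists>g \<in> ST_group 6. refl_length (ST_group 6) g > codim g"
proof -
  have g0: "is_reflection (refl_gen 1 4 (0) (0) (0) (1)) \<and> det (refl_gen 1 4 (0) (0) (0) (1)) ^ 6 = 1"
    by (rule gen_ok, rule cgen_1_4[symmetric]) ((simp_all only: i1 i2)?, simp_all add: power2_eq_square, (simp_all only: tau_def)?, (simp_all add: field_simps power2_eq_square)?)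
  have g1: "is_reflection (refl_gen 1 3 (-1/2) (-1/2) (-1/2) (-1/2)) \<and> det (refl_gen 1 3 (-1/2) (-1/2) (-1/2) (-1/2)) ^ 6 = 1"
    by (rule gen_ok, rule cgen_1_3[symmetric]) ((simp_all only: i1 i2)?, simp_all add: power2_eq_square, (simp_all only: tau_def)?, (simp_all add: field_simps power2_eq_square)?)
  have gens: "\<forall>s\<in>set (ST_gens_list ! (6-4)). is_reflection s \<and> det s ^ 6 = 1"
    unfolding ST6_gens using g0 g1 by auto
  have cv: "cos (2*pi*(of_int 2 / of_int 12)) = 1/2"
  proof -
    have e: "2*pi*(of_int 2 / of_int 12) = pi/3" by simp
    show ?thesis unfolding e by (simp add: cos_60)
  qed
  have P: "mpow ((refl_gen 1 4 (0) (0) (0) (1)) ** (refl_gen 1 3 (-1/2) (-1/2) (-1/2) (-1/2))) 3 = mat2 (cis (2*pi*(of_int 7 / of_int 12 + of_int 2 / of_int 12))^3) 0 0 (cis (2*pi*(of_int 7 / of_int 12 + of_int 2 / of_int 12))^3)"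
    by (rule pair_scalar(1)[where P=2 and Q=12 and T=7 and n=3 and d=6 and ka=1 and ma=4 and kb=1 and mb=3 and xa="0" and xb="0" and xc="0" and xd="1" and ya="-1/2" and yb="-1/2" and yc="-1/2" and yd="-1/2"]) (use cv in \<open>((simp_all only: i1 i2)?, simp_all add: power2_eq_square, (simp_all only: tau_def)?, (simp_all add: field_simps power2_eq_square)?)\<close>)
  have L: "(cis (2*pi*(of_int 7 / of_int 12 + of_int 2 / of_int 12))^3)^6 \<noteq> 1"
    by (rule pair_scalar(2)[where P=2 and Q=12 and T=7 and n=3 and d=6 and ka=1 and ma=4 and kb=1 and mb=3 and xa="0" and xb="0" and xc="0" and xd="1" and ya="-1/2" and yb="-1/2" and yc="-1/2" and yd="-1/2"]) (use cv in \<open>((simp_all only: i1 i2)?, simp_all add: power2_eq_square, (simp_all only: tau_def)?, (simp_all add: field_simps power2_eq_square)?)\<close>)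
  show ?thesis unfolding ST_group_def
    apply (rule scalar_case[where w="concat (replicate 3 [refl_gen 1 4 (0) (0) (0) (1), refl_gen 1 3 (-1/2) (-1/2) (-1/2) (-1/2)])" and d=6, OF _ _ _ _ L])
    using gens P unfolding word_pow ST6_gens by auto
qed

lemma ST7_gens: "ST_gens_list ! (7-4) = [refl_gen 2 3 (-1/2) (-1/2) (-1/2) (-1/2), refl_gen 1 3 (-1/2) (-1/2) (1/2) (1/2), refl_gen 1 4 (0) (-1) (0) (0)]"
  by (simp add: ST_gens_list_def)

lemma G7: "\<exists>g \<in> ST_group 7. refl_length (ST_group 7) g > codim g"
proof -
  have g0: "is_reflection (refl_gen 2 3 (-1/2) (-1/2) (-1/2) (-1/2)) \<and> det (refl_gen 2 3 (-1/2) (-1/2) (-1/2) (-1/2)) ^ 6 = 1"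
    by (rule gen_ok, rule cgen_2_3[symmetric]) ((simp_all only: i1 i2)?, simp_all add: power2_eq_square, (simp_all only: tau_def)?, (simp_all add: field_simps power2_eq_square)?)
  have g1: "is_reflection (refl_gen 1 3 (-1/2) (-1/2) (1/2) (1/2)) \<and> det (refl_gen 1 3 (-1/2) (-1/2) (1/2) (1/2)) ^ 6 = 1"
    by (rule gen_ok, rule cgen_1_3[symmetric]) ((simp_all only: i1 i2)?, simp_all add: power2_eq_square, (simp_all only: tau_def)?, (simp_all add: field_simps power2_eq_square)?)
  have g2: "is_reflection (refl_gen 1 4 (0) (-1) (0) (0)) \<and> det (refl_gen 1 4 (0) (-1) (0) (0)) ^ 6 = 1"
    by (rule gen_ok, rule cgen_1_4[symmetric]) ((simp_all only: i1 i2)?, simp_all add: power2_eq_square, (simp_all only: tau_def)?, (simp_all add: field_simps power2_eq_square)?)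
  have gens: "\<forall>s\<in>set (ST_gens_list ! (7-4)). is_reflection s \<and> det s ^ 6 = 1"
    unfolding ST7_gens using g0 g1 g2 by auto
  have cv: "cos (2*pi*(of_int 4 / of_int 12)) = -1/2"
  proof -
    have e: "2*pi*(of_int 4 / of_int 12) = 2*pi/3" by simp
    show ?thesis unfolding e by (simp add: cos_2pi3)
  qed
  have P: "mpow ((refl_gen 2 3 (-1/2) (-1/2) (-1/2) (-1/2)) ** (refl_gen 1 4 (0) (-1) (0) (0))) 3 = mat2 (cis (2*pi*(of_int 11 / of_int 12 + of_int 4 / of_int 12))^3) 0 0 (cis (2*pi*(of_int 11 / of_int 12 + of_int 4 / of_int 12))^3)"
    by (rule pair_scalar(1)[where P=4 and Q=12 and T=11 and n=3 and d=6 and ka=2 and ma=3 and kb=1 and mb=4 and xa="-1/2" and xb="-1/2" and xc="-1/2" and xd="-1/2" and ya="0" and yb="-1" and yc="0" and yd="0"]) (use cv in \<open>((simp_all only: i1 i2)?, simp_all add: power2_eq_square, (simp_all only: tau_def)?, (simp_all add: field_simps power2_eq_square)?)\<close>)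
  have L: "(cis (2*pi*(of_int 11 / of_int 12 + of_int 4 / of_int 12))^3)^6 \<noteq> 1"
    by (rule pair_scalar(2)[where P=4 and Q=12 and T=11 and n=3 and d=6 and ka=2 and ma=3 and kb=1 and mb=4 and xa="-1/2" and xb="-1/2" and xc="-1/2" and xd="-1/2" and ya="0" and yb="-1" and yc="0" and yd="0"]) (use cv in \<open>((simp_all only: i1 i2)?, simp_all add: power2_eq_square, (simp_all only: tau_def)?, (simp_all add: field_simps power2_eq_square)?)\<close>)
  show ?thesis unfolding ST_group_def
    apply (rule scalar_case[where w="concat (replicate 3 [refl_gen 2 3 (-1/2) (-1/2) (-1/2) (-1/2), refl_gen 1 4 (0) (-1) (0) (0)])" and d=6, OF _ _ _ _ L])
    using gens P unfolding word_pow ST7_gens by auto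
qed

lemma ST9_gens: "ST_gens_list ! (9-4) = [refl_gen 1 8 (1/sqrt 2) (1/sqrt 2) (0) (0), refl_gen 1 4 (0) (-1/sqrt 2) (0) (1/sqrt 2)]"
  by (simp add: ST_gens_list_def)

lemma G9: "\<exists>g \<in> ST_group 9. refl_length (ST_group 9) g > codim g"
proof -
  have g0: "is_reflection (refl_gen 1 8 (1/sqrt 2) (1/sqrt 2) (0) (0)) \<and> det (refl_gen 1 8 (1/sqrt 2) (1/sqrt 2) (0) (0)) ^ 4 = 1"
    by (rule gen_ok, rule cgen_1_8[symmetric]) ((simp_all only: i1 i2)?, simp_all add: power2_eq_square, (simp_all only: tau_def)?, (simp_all add: field_simps power2_eq_square)?)
  have g1: "is_reflection (refl_gen 1 4 (0) (-1/sqrt 2) (0) (1/sqrt 2)) \<and> det (refl_gen 1 4 (0) (-1/sqrt 2) (0) (1/sqrt 2)) ^ 4 = 1"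
    by (rule gen_ok, rule cgen_1_4[symmetric]) ((simp_all only: i1 i2)?, simp_all add: power2_eq_square, (simp_all only: tau_def)?, (simp_all add: field_simps power2_eq_square)?)
  have gens: "\<forall>s\<in>set (ST_gens_list ! (9-4)). is_reflection s \<and> det s ^ 4 = 1"
    unfolding ST9_gens using g0 g1 by auto
  have cv: "cos (2*pi*(of_int 4 / of_int 24)) = 1/2"
  proof -
    have e: "2*pi*(of_int 4 / of_int 24) = pi/3" by simp
    show ?thesis unfolding e by (simp add: cos_60)
  qed
  have P: "mpow ((refl_gen 1 8 (1/sqrt 2) (1/sqrt 2) (0) (0)) ** (refl_gen 1 4 (0) (-1/sqrt 2) (0) (1/sqrt 2))) 3 = mat2 (cis (2*pi*(of_int 9 / of_int 24 + of_int 4 / of_int 24))^3) 0 0 (cis (2*pi*(of_int 9 / of_int 24 + of_int 4 / of_int 24))^3)"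
    by (rule pair_scalar(1)[where P=4 and Q=24 and T=9 and n=3 and d=4 and ka=1 and ma=8 and kb=1 and mb=4 and xa="1/sqrt 2" and xb="1/sqrt 2" and xc="0" and xd="0" and ya="0" and yb="-1/sqrt 2" and yc="0" and yd="1/sqrt 2"]) (use cv in \<open>((simp_all only: i1 i2)?, simp_all add: power2_eq_square, (simp_all only: tau_def)?, (simp_all add: field_simps power2_eq_square)?)\<close>)
  have L: "(cis (2*pi*(of_int 9 / of_int 24 + of_int 4 / of_int 24))^3)^4 \<noteq> 1"
    by (rule pair_scalar(2)[where P=4 and Q=24 and T=9 and n=3 and d=4 and ka=1 and ma=8 and kb=1 and mb=4 and xa="1/sqrt 2" and xb="1/sqrt 2" and xc="0" and xd="0" and ya="0" and yb="-1/sqrt 2" and yc="0" and yd="1/sqrt 2"]) (use cv in \<open>((simp_all only: i1 i2)?, simp_all add: power2_eq_square, (simp_all only: tau_def)?, (simp_all add: field_simps power2_eq_square)?)\<close>)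
  show ?thesis unfolding ST_group_def
    apply (rule scalar_case[where w="concat (replicate 3 [refl_gen 1 8 (1/sqrt 2) (1/sqrt 2) (0) (0), refl_gen 1 4 (0) (-1/sqrt 2) (0) (1/sqrt 2)])" and d=4, OF _ _ _ _ L])
    using gens P unfolding word_pow ST9_gens by auto
qed

lemma ST11_gens: "ST_gens_list ! (11-4) = [refl_gen 2 3 (-1/2) (-1/2) (1/2) (1/2), refl_gen 1 8 (1/sqrt 2) (0) (0) (1/sqrt 2), refl_gen 1 4 (0) (-1/sqrt 2) (0) (-1/sqrt 2)]"
  by (simp add: ST_gens_list_def)

lemma G11: "\<exists>g \<in> ST_group 11. refl_length (ST_group 11) g > codim g"
proof -
  have g0: "is_reflection (refl_gen 2 3 (-1/2) (-1/2) (1/2) (1/2)) \<and> det (refl_gen 2 3 (-1/2) (-1/2) (1/2) (1/2)) ^ 12 = 1"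
    by (rule gen_ok, rule cgen_2_3[symmetric]) ((simp_all only: i1 i2)?, simp_all add: power2_eq_square, (simp_all only: tau_def)?, (simp_all add: field_simps power2_eq_square)?)
  have g1: "is_reflection (refl_gen 1 8 (1/sqrt 2) (0) (0) (1/sqrt 2)) \<and> det (refl_gen 1 8 (1/sqrt 2) (0) (0) (1/sqrt 2)) ^ 12 = 1"
    by (rule gen_ok, rule cgen_1_8[symmetric]) ((simp_all only: i1 i2)?, simp_all add: power2_eq_square, (simp_all only: tau_def)?, (simp_all add: field_simps power2_eq_square)?)
  have g2: "is_reflection (refl_gen 1 4 (0) (-1/sqrt 2) (0) (-1/sqrt 2)) \<and> det (refl_gen 1 4 (0) (-1/sqrt 2) (0) (-1/sqrt 2)) ^ 12 = 1"
    by (rule gen_ok, rule cgen_1_4[symmetric]) ((simp_all only: i1 i2)?, simp_all add: power2_eq_square, (simp_all only: tau_def)?, (simp_all add: field_simps power2_eq_square)?)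
  have gens: "\<forall>s\<in>set (ST_gens_list ! (11-4)). is_reflection s \<and> det s ^ 12 = 1"
    unfolding ST11_gens using g0 g1 g2 by auto
  have cv: "cos (2*pi*(of_int 4 / of_int 24)) = 1/2"
  proof -
    have e: "2*pi*(of_int 4 / of_int 24) = pi/3" by simp
    show ?thesis unfolding e by (simp add: cos_60)
  qed
  have P: "mpow ((refl_gen 1 8 (1/sqrt 2) (0) (0) (1/sqrt 2)) ** (refl_gen 1 4 (0) (-1/sqrt 2) (0) (-1/sqrt 2))) 3 = mat2 (cis (2*pi*(of_int 9 / of_int 24 + of_int 4 / of_int 24))^3) 0 0 (cis (2*pi*(of_int 9 / of_int 24 + of_int 4 / of_int 24))^3)"
    by (rule pair_scalar(1)[where P=4 and Q=24 and T=9 and n=3 and d=12 and ka=1 and ma=8 and kb=1 and mb=4 and xa="1/sqrt 2" and xb="0" and xc="0" and xd="1/sqrt 2" and ya="0" and yb="-1/sqrt 2" and yc="0" and yd="-1/sqrt 2"]) (use cv in \<open>((simp_all only: i1 i2)?, simp_all add: power2_eq_square, (simp_all only: tau_def)?, (simp_all add: field_simps power2_eq_square)?)\<close>)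
  have L: "(cis (2*pi*(of_int 9 / of_int 24 + of_int 4 / of_int 24))^3)^12 \<noteq> 1"
    by (rule pair_scalar(2)[where P=4 and Q=24 and T=9 and n=3 and d=12 and ka=1 and ma=8 and kb=1 and mb=4 and xa="1/sqrt 2" and xb="0" and xc="0" and xd="1/sqrt 2" and ya="0" and yb="-1/sqrt 2" and yc="0" and yd="-1/sqrt 2"]) (use cv in \<open>((simp_all only: i1 i2)?, simp_all add: power2_eq_square, (simp_all only: tau_def)?, (simp_all add: field_simps power2_eq_square)?)\<close>)
  show ?thesis unfolding ST_group_def
    apply (rule scalar_case[where w="concat (replicate 3 [refl_gen 1 8 (1/sqrt 2) (0) (0) (1/sqrt 2), refl_gen 1 4 (0) (-1/sqrt 2) (0) (-1/sqrt 2)])" and d=12, OF _ _ _ _ L])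
    using gens P unfolding word_pow ST11_gens by auto
qed

lemma ST15_gens: "ST_gens_list ! (15-4) = [refl_gen 1 4 (0) (1) (0) (0), refl_gen 2 3 (-1/2) (1/2) (-1/2) (-1/2), refl_gen 1 4 (0) (-1/sqrt 2) (0) (-1/sqrt 2)]"
  by (simp add: ST_gens_list_def)

lemma G15: "\<exists>g \<in> ST_group 15. refl_length (ST_group 15) g > codim g"
proof -
  have g0: "is_reflection (refl_gen 1 4 (0) (1) (0) (0)) \<and> det (refl_gen 1 4 (0) (1) (0) (0)) ^ 6 = 1"
    by (rule gen_ok, rule cgen_1_4[symmetric]) ((simp_all only: i1 i2)?, simp_all add: power2_eq_square, (simp_all only: tau_def)?, (simp_all add: field_simps power2_eq_square)?)
  have g1: "is_reflection (refl_gen 2 3 (-1/2) (1/2) (-1/2) (-1/2)) \<and> det (refl_gen 2 3 (-1/2) (1/2) (-1/2) (-1/2)) ^ 6 = 1"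
    by (rule gen_ok, rule cgen_2_3[symmetric]) ((simp_all only: i1 i2)?, simp_all add: power2_eq_square, (simp_all only: tau_def)?, (simp_all add: field_simps power2_eq_square)?)
  have g2: "is_reflection (refl_gen 1 4 (0) (-1/sqrt 2) (0) (-1/sqrt 2)) \<and> det (refl_gen 1 4 (0) (-1/sqrt 2) (0) (-1/sqrt 2)) ^ 6 = 1"
    by (rule gen_ok, rule cgen_1_4[symmetric]) ((simp_all only: i1 i2)?, simp_all add: power2_eq_square, (simp_all only: tau_def)?, (simp_all add: field_simps power2_eq_square)?)
  have gens: "\<forall>s\<in>set (ST_gens_list ! (15-4)). is_reflection s \<and> det s ^ 6 = 1"
    unfolding ST15_gens using g0 g1 g2 by auto
  have cv: "cos (2*pi*(of_int 4 / of_int 12)) = -1/2"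
  proof -
    have e: "2*pi*(of_int 4 / of_int 12) = 2*pi/3" by simp
    show ?thesis unfolding e by (simp add: cos_2pi3)
  qed
  have P: "mpow ((refl_gen 1 4 (0) (1) (0) (0)) ** (refl_gen 2 3 (-1/2) (1/2) (-1/2) (-1/2))) 3 = mat2 (cis (2*pi*(of_int 11 / of_int 12 + of_int 4 / of_int 12))^3) 0 0 (cis (2*pi*(of_int 11 / of_int 12 + of_int 4 / of_int 12))^3)"
    by (rule pair_scalar(1)[where P=4 and Q=12 and T=11 and n=3 and d=6 and ka=1 and ma=4 and kb=2 and mb=3 and xa="0" and xb="1" and xc="0" and xd="0" and ya="-1/2" and yb="1/2" and yc="-1/2" and yd="-1/2"]) (use cv in \<open>((simp_all only: i1 i2)?, simp_all add: power2_eq_square, (simp_all only: tau_def)?, (simp_all add: field_simps power2_eq_square)?)\<close>)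
  have L: "(cis (2*pi*(of_int 11 / of_int 12 + of_int 4 / of_int 12))^3)^6 \<noteq> 1"
    by (rule pair_scalar(2)[where P=4 and Q=12 and T=11 and n=3 and d=6 and ka=1 and ma=4 and kb=2 and mb=3 and xa="0" and xb="1" and xc="0" and xd="0" and ya="-1/2" and yb="1/2" and yc="-1/2" and yd="-1/2"]) (use cv in \<open>((simp_all only: i1 i2)?, simp_all add: power2_eq_square, (simp_all only: tau_def)?, (simp_all add: field_simps power2_eq_square)?)\<close>)
  show ?thesis unfolding ST_group_def
    apply (rule scalar_case[where w="concat (replicate 3 [refl_gen 1 4 (0) (1) (0) (0), refl_gen 2 3 (-1/2) (1/2) (-1/2) (-1/2)])" and d=6, OF _ _ _ _ L])
    using gens P unfolding word_pow ST15_gens by auto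
qed

lemma ST16_gens: "ST_gens_list ! (16-4) = [refl_gen 1 5 (1/(2*tau)) (1/2) (-tau/2) (0), refl_gen 4 5 (1/(2*tau)) (0) (1/2) (-tau/2)]"
  by (simp add: ST_gens_list_def)

lemma G16: "\<exists>g \<in> ST_group 16. refl_length (ST_group 16) g > codim g"
proof -
  have g0: "is_reflection (refl_gen 1 5 (1/(2*tau)) (1/2) (-tau/2) (0)) \<and> det (refl_gen 1 5 (1/(2*tau)) (1/2) (-tau/2) (0)) ^ 5 = 1"
    by (rule gen_ok, rule cgen_1_5[symmetric]) ((simp_all only: i1 i2)?, simp_all add: power2_eq_square, (simp_all only: tau_def)?, (simp_all add: field_simps power2_eq_square)?)
  have g1: "is_reflection (refl_gen 4 5 (1/(2*tau)) (0) (1/2) (-tau/2)) \<and> det (refl_gen 4 5 (1/(2*tau)) (0) (1/2) (-tau/2)) ^ 5 = 1"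
    by (rule gen_ok, rule cgen_4_5[symmetric]) ((simp_all only: i1 i2)?, simp_all add: power2_eq_square, (simp_all only: tau_def)?, (simp_all add: field_simps power2_eq_square)?)
  have gens: "\<forall>s\<in>set (ST_gens_list ! (16-4)). is_reflection s \<and> det s ^ 5 = 1"
    unfolding ST16_gens using g0 g1 by auto
  have cv: "cos (2*pi*(of_int 1 / of_int 6)) = 1/2"
  proof -
    have e: "2*pi*(of_int 1 / of_int 6) = pi/3" by simp
    show ?thesis unfolding e by (simp add: cos_60)
  qed
  have P: "mpow ((refl_gen 1 5 (1/(2*tau)) (1/2) (-tau/2) (0)) ** (refl_gen 4 5 (1/(2*tau)) (0) (1/2) (-tau/2))) 3 = mat2 (cis (2*pi*(of_int 6 / of_int 6 + of_int 1 / of_int 6))^3) 0 0 (cis (2*pi*(of_int 6 / of_int 6 + of_int 1 / of_int 6))^3)"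
    by (rule pair_scalar(1)[where P=1 and Q=6 and T=6 and n=3 and d=5 and ka=1 and ma=5 and kb=4 and mb=5 and xa="1/(2*tau)" and xb="1/2" and xc="-tau/2" and xd="0" and ya="1/(2*tau)" and yb="0" and yc="1/2" and yd="-tau/2"]) (use cv in \<open>((simp_all only: i1 i2)?, simp_all add: power2_eq_square, (simp_all only: tau_def)?, (simp_all add: field_simps power2_eq_square)?)\<close>)
  have L: "(cis (2*pi*(of_int 6 / of_int 6 + of_int 1 / of_int 6))^3)^5 \<noteq> 1"
    by (rule pair_scalar(2)[where P=1 and Q=6 and T=6 and n=3 and d=5 and ka=1 and ma=5 and kb=4 and mb=5 and xa="1/(2*tau)" and xb="1/2" and xc="-tau/2" and xd="0" and ya="1/(2*tau)" and yb="0" and yc="1/2" and yd="-tau/2"]) (use cv in \<open>((simp_all only: i1 i2)?, simp_all add: power2_eq_square, (simp_all only: tau_def)?, (simp_all add: field_simps power2_eq_square)?)\<close>)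
  show ?thesis unfolding ST_group_def
    apply (rule scalar_case[where w="concat (replicate 3 [refl_gen 1 5 (1/(2*tau)) (1/2) (-tau/2) (0), refl_gen 4 5 (1/(2*tau)) (0) (1/2) (-tau/2)])" and d=5, OF _ _ _ _ L])
    using gens P unfolding word_pow ST16_gens by auto
qed

lemma ST17_gens: "ST_gens_list ! (17-4) = [refl_gen 1 4 (0) (tau/2) (1/2) (-1/(2*tau)), refl_gen 1 5 (1/(2*tau)) (tau/2) (0) (1/2)]"
  by (simp add: ST_gens_list_def)

lemma G17: "\<exists>g \<in> ST_group 17. refl_length (ST_group 17) g > codim g"
proof -
  have g0: "is_reflection (refl_gen 1 4 (0) (tau/2) (1/2) (-1/(2*tau))) \<and> det (refl_gen 1 4 (0) (tau/2) (1/2) (-1/(2*tau))) ^ 10 = 1"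
    by (rule gen_ok, rule cgen_1_4[symmetric]) ((simp_all only: i1 i2)?, simp_all add: power2_eq_square, (simp_all only: tau_def)?, (simp_all add: field_simps power2_eq_square)?)
  have g1: "is_reflection (refl_gen 1 5 (1/(2*tau)) (tau/2) (0) (1/2)) \<and> det (refl_gen 1 5 (1/(2*tau)) (tau/2) (0) (1/2)) ^ 10 = 1"
    by (rule gen_ok, rule cgen_1_5[symmetric]) ((simp_all only: i1 i2)?, simp_all add: power2_eq_square, (simp_all only: tau_def)?, (simp_all add: field_simps power2_eq_square)?)
  have gens: "\<forall>s\<in>set (ST_gens_list ! (17-4)). is_reflection s \<and> det s ^ 10 = 1"
    unfolding ST17_gens using g0 g1 by auto
  have cv: "cos (2*pi*(of_int 20 / of_int 60)) = -1/2"
  proof -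
    have e: "2*pi*(of_int 20 / of_int 60) = 2*pi/3" by simp
    show ?thesis unfolding e by (simp add: cos_2pi3)
  qed
  have P: "mpow ((refl_gen 1 4 (0) (tau/2) (1/2) (-1/(2*tau))) ** (refl_gen 1 5 (1/(2*tau)) (tau/2) (0) (1/2))) 3 = mat2 (cis (2*pi*(of_int 27 / of_int 60 + of_int 20 / of_int 60))^3) 0 0 (cis (2*pi*(of_int 27 / of_int 60 + of_int 20 / of_int 60))^3)"
    by (rule pair_scalar(1)[where P=20 and Q=60 and T=27 and n=3 and d=10 and ka=1 and ma=4 and kb=1 and mb=5 and xa="0" and xb="tau/2" and xc="1/2" and xd="-1/(2*tau)" and ya="1/(2*tau)" and yb="tau/2" and yc="0" and yd="1/2"]) (use cv in \<open>((simp_all only: i1 i2)?, simp_all add: power2_eq_square, (simp_all only: tau_def)?, (simp_all add: field_simps power2_eq_square)?)\<close>)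
  have L: "(cis (2*pi*(of_int 27 / of_int 60 + of_int 20 / of_int 60))^3)^10 \<noteq> 1"
    by (rule pair_scalar(2)[where P=20 and Q=60 and T=27 and n=3 and d=10 and ka=1 and ma=4 and kb=1 and mb=5 and xa="0" and xb="tau/2" and xc="1/2" and xd="-1/(2*tau)" and ya="1/(2*tau)" and yb="tau/2" and yc="0" and yd="1/2"]) (use cv in \<open>((simp_all only: i1 i2)?, simp_all add: power2_eq_square, (simp_all only: tau_def)?, (simp_all add: field_simps power2_eq_square)?)\<close>)
  show ?thesis unfolding ST_group_def
    apply (rule scalar_case[where w="concat (replicate 3 [refl_gen 1 4 (0) (tau/2) (1/2) (-1/(2*tau)), refl_gen 1 5 (1/(2*tau)) (tau/2) (0) (1/2)])" and d=10, OF _ _ _ _ L])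
    using gens P unfolding word_pow ST17_gens by auto
qed

lemma ST18_gens: "ST_gens_list ! (18-4) = [refl_gen 1 3 (-1/2) (-1/(2*tau)) (0) (tau/2), refl_gen 1 5 (1/(2*tau)) (0) (1/2) (-tau/2)]"
  by (simp add: ST_gens_list_def)

lemma G18: "\<exists>g \<in> ST_group 18. refl_length (ST_group 18) g > codim g"
proof -
  have g0: "is_reflection (refl_gen 1 3 (-1/2) (-1/(2*tau)) (0) (tau/2)) \<and> det (refl_gen 1 3 (-1/2) (-1/(2*tau)) (0) (tau/2)) ^ 15 = 1"
    by (rule gen_ok, rule cgen_1_3[symmetric]) ((simp_all only: i1 i2)?, simp_all add: power2_eq_square, (simp_all only: tau_def)?, (simp_all add: field_simps power2_eq_square)?)
  have g1: "is_reflection (refl_gen 1 5 (1/(2*tau)) (0) (1/2) (-tau/2)) \<and> det (refl_gen 1 5 (1/(2*tau)) (0) (1/2) (-tau/2)) ^ 15 = 1"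
    by (rule gen_ok, rule cgen_1_5[symmetric]) ((simp_all only: i1 i2)?, simp_all add: power2_eq_square, (simp_all only: tau_def)?, (simp_all add: field_simps power2_eq_square)?)
  have gens: "\<forall>s\<in>set (ST_gens_list ! (18-4)). is_reflection s \<and> det s ^ 15 = 1"
    unfolding ST18_gens using g0 g1 by auto
  have cv: "cos (2*pi*(of_int 5 / of_int 30)) = 1/2"
  proof -
    have e: "2*pi*(of_int 5 / of_int 30) = pi/3" by simp
    show ?thesis unfolding e by (simp add: cos_60)
  qed
  have P: "mpow ((refl_gen 1 3 (-1/2) (-1/(2*tau)) (0) (tau/2)) ** (refl_gen 1 5 (1/(2*tau)) (0) (1/2) (-tau/2))) 3 = mat2 (cis (2*pi*(of_int 16 / of_int 30 + of_int 5 / of_int 30))^3) 0 0 (cis (2*pi*(of_int 16 / of_int 30 + of_int 5 / of_int 30))^3)"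
    by (rule pair_scalar(1)[where P=5 and Q=30 and T=16 and n=3 and d=15 and ka=1 and ma=3 and kb=1 and mb=5 and xa="-1/2" and xb="-1/(2*tau)" and xc="0" and xd="tau/2" and ya="1/(2*tau)" and yb="0" and yc="1/2" and yd="-tau/2"]) (use cv in \<open>((simp_all only: i1 i2)?, simp_all add: power2_eq_square, (simp_all only: tau_def)?, (simp_all add: field_simps power2_eq_square)?)\<close>)
  have L: "(cis (2*pi*(of_int 16 / of_int 30 + of_int 5 / of_int 30))^3)^15 \<noteq> 1"
    by (rule pair_scalar(2)[where P=5 and Q=30 and T=16 and n=3 and d=15 and ka=1 and ma=3 and kb=1 and mb=5 and xa="-1/2" and xb="-1/(2*tau)" and xc="0" and xd="tau/2" and ya="1/(2*tau)" and yb="0" and yc="1/2" and yd="-tau/2"]) (use cv in \<open>((simp_all only: i1 i2)?, simp_all add: power2_eq_square, (simp_all only: tau_def)?, (simp_all add: field_simps power2_eq_square)?)\<close>)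
  show ?thesis unfolding ST_group_def
    apply (rule scalar_case[where w="concat (replicate 3 [refl_gen 1 3 (-1/2) (-1/(2*tau)) (0) (tau/2), refl_gen 1 5 (1/(2*tau)) (0) (1/2) (-tau/2)])" and d=15, OF _ _ _ _ L])
    using gens P unfolding word_pow ST18_gens by auto
qed

lemma ST19_gens: "ST_gens_list ! (19-4) = [refl_gen 3 5 (-tau/2) (0) (1/(2*tau)) (1/2), refl_gen 2 3 (-1/2) (-1/2) (-1/2) (-1/2), refl_gen 1 4 (0) (1/(2*tau)) (tau/2) (-1/2)]"
  by (simp add: ST_gens_list_def)

lemma G19: "\<exists>g \<in> ST_group 19. refl_length (ST_group 19) g > codim g"
proof -
  have g0: "is_reflection (refl_gen 3 5 (-tau/2) (0) (1/(2*tau)) (1/2)) \<and> det (refl_gen 3 5 (-tau/2) (0) (1/(2*tau)) (1/2)) ^ 30 = 1"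
    by (rule gen_ok, rule cgen_3_5[symmetric]) ((simp_all only: i1 i2)?, simp_all add: power2_eq_square, (simp_all only: tau_def)?, (simp_all add: field_simps power2_eq_square)?)
  have g1: "is_reflection (refl_gen 2 3 (-1/2) (-1/2) (-1/2) (-1/2)) \<and> det (refl_gen 2 3 (-1/2) (-1/2) (-1/2) (-1/2)) ^ 30 = 1"
    by (rule gen_ok, rule cgen_2_3[symmetric]) ((simp_all only: i1 i2)?, simp_all add: power2_eq_square, (simp_all only: tau_def)?, (simp_all add: field_simps power2_eq_square)?)
  have g2: "is_reflection (refl_gen 1 4 (0) (1/(2*tau)) (tau/2) (-1/2)) \<and> det (refl_gen 1 4 (0) (1/(2*tau)) (tau/2) (-1/2)) ^ 30 = 1"
    by (rule gen_ok, rule cgen_1_4[symmetric]) ((simp_all only: i1 i2)?, simp_all add: power2_eq_square, (simp_all only: tau_def)?, (simp_all add: field_simps power2_eq_square)?)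
  have gens: "\<forall>s\<in>set (ST_gens_list ! (19-4)). is_reflection s \<and> det s ^ 30 = 1"
    unfolding ST19_gens using g0 g1 g2 by auto
  have cv: "cos (2*pi*(of_int 12 / of_int 60)) = 1/(2*tau)"
  proof -
    have e: "2*pi*(of_int 12 / of_int 60) = 2*pi/5" by simp
    show ?thesis unfolding e by (simp add: cos_2pi5)
  qed
  have P: "mpow ((refl_gen 2 3 (-1/2) (-1/2) (-1/2) (-1/2)) ** (refl_gen 1 4 (0) (1/(2*tau)) (tau/2) (-1/2))) 5 = mat2 (cis (2*pi*(of_int 55 / of_int 60 + of_int 12 / of_int 60))^5) 0 0 (cis (2*pi*(of_int 55 / of_int 60 + of_int 12 / of_int 60))^5)"
    by (rule pair_scalar(1)[where P=12 and Q=60 and T=55 and n=5 and d=30 and ka=2 and ma=3 and kb=1 and mb=4 and xa="-1/2" and xb="-1/2" and xc="-1/2" and xd="-1/2" and ya="0" and yb="1/(2*tau)" and yc="tau/2" and yd="-1/2"]) (use cv in \<open>((simp_all only: i1 i2)?, simp_all add: power2_eq_square, (simp_all only: tau_def)?, (simp_all add: field_simps power2_eq_square)?)\<close>)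
  have L: "(cis (2*pi*(of_int 55 / of_int 60 + of_int 12 / of_int 60))^5)^30 \<noteq> 1"
    by (rule pair_scalar(2)[where P=12 and Q=60 and T=55 and n=5 and d=30 and ka=2 and ma=3 and kb=1 and mb=4 and xa="-1/2" and xb="-1/2" and xc="-1/2" and xd="-1/2" and ya="0" and yb="1/(2*tau)" and yc="tau/2" and yd="-1/2"]) (use cv in \<open>((simp_all only: i1 i2)?, simp_all add: power2_eq_square, (simp_all only: tau_def)?, (simp_all add: field_simps power2_eq_square)?)\<close>)
  show ?thesis unfolding ST_group_def
    apply (rule scalar_case[where w="concat (replicate 5 [refl_gen 2 3 (-1/2) (-1/2) (-1/2) (-1/2), refl_gen 1 4 (0) (1/(2*tau)) (tau/2) (-1/2)])" and d=30, OF _ _ _ _ L])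
    using gens P unfolding word_pow ST19_gens by auto
qed

lemma ST20_gens: "ST_gens_list ! (20-4) = [refl_gen 1 3 (-1/2) (tau/2) (-1/(2*tau)) (0), refl_gen 2 3 (-1/2) (1/2) (-1/2) (-1/2)]"
  by (simp add: ST_gens_list_def)

lemma G20: "\<exists>g \<in> ST_group 20. refl_length (ST_group 20) g > codim g"
proof -
  have g0: "is_reflection (refl_gen 1 3 (-1/2) (tau/2) (-1/(2*tau)) (0)) \<and> det (refl_gen 1 3 (-1/2) (tau/2) (-1/(2*tau)) (0)) ^ 3 = 1"
    by (rule gen_ok, rule cgen_1_3[symmetric]) ((simp_all only: i1 i2)?, simp_all add: power2_eq_square, (simp_all only: tau_def)?, (simp_all add: field_simps power2_eq_square)?)
  have g1: "is_reflection (refl_gen 2 3 (-1/2) (1/2) (-1/2) (-1/2)) \<and> det (refl_gen 2 3 (-1/2) (1/2) (-1/2) (-1/2)) ^ 3 = 1"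
    by (rule gen_ok, rule cgen_2_3[symmetric]) ((simp_all only: i1 i2)?, simp_all add: power2_eq_square, (simp_all only: tau_def)?, (simp_all add: field_simps power2_eq_square)?)
  have gens: "\<forall>s\<in>set (ST_gens_list ! (20-4)). is_reflection s \<and> det s ^ 3 = 1"
    unfolding ST20_gens using g0 g1 by auto
  have cv: "cos (2*pi*(of_int 3 / of_int 10)) = -1/(2*tau)"
  proof -
    have e: "2*pi*(of_int 3 / of_int 10) = 3*pi/5" by simp
    show ?thesis unfolding e by (simp add: cos_3pi5)
  qed
  have P: "mpow ((refl_gen 1 3 (-1/2) (tau/2) (-1/(2*tau)) (0)) ** (refl_gen 2 3 (-1/2) (1/2) (-1/2) (-1/2))) 5 = mat2 (cis (2*pi*(of_int 10 / of_int 10 + of_int 3 / of_int 10))^5) 0 0 (cis (2*pi*(of_int 10 / of_int 10 + of_int 3 / of_int 10))^5)"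
    by (rule pair_scalar(1)[where P=3 and Q=10 and T=10 and n=5 and d=3 and ka=1 and ma=3 and kb=2 and mb=3 and xa="-1/2" and xb="tau/2" and xc="-1/(2*tau)" and xd="0" and ya="-1/2" and yb="1/2" and yc="-1/2" and yd="-1/2"]) (use cv in \<open>((simp_all only: i1 i2)?, simp_all add: power2_eq_square, (simp_all only: tau_def)?, (simp_all add: field_simps power2_eq_square)?)\<close>)
  have L: "(cis (2*pi*(of_int 10 / of_int 10 + of_int 3 / of_int 10))^5)^3 \<noteq> 1"
    by (rule pair_scalar(2)[where P=3 and Q=10 and T=10 and n=5 and d=3 and ka=1 and ma=3 and kb=2 and mb=3 and xa="-1/2" and xb="tau/2" and xc="-1/(2*tau)" and xd="0" and ya="-1/2" and yb="1/2" and yc="-1/2" and yd="-1/2"]) (use cv in \<open>((simp_all only: i1 i2)?, simp_all add: power2_eq_square, (simp_all only: tau_def)?, (simp_all add: field_simps power2_eq_square)?)\<close>)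
  show ?thesis unfolding ST_group_def
    apply (rule scalar_case[where w="concat (replicate 5 [refl_gen 1 3 (-1/2) (tau/2) (-1/(2*tau)) (0), refl_gen 2 3 (-1/2) (1/2) (-1/2) (-1/2)])" and d=3, OF _ _ _ _ L])
    using gens P unfolding word_pow ST20_gens by auto
qed

lemma ST21_gens: "ST_gens_list ! (21-4) = [refl_gen 2 3 (-1/2) (-1/2) (1/2) (-1/2), refl_gen 1 4 (0) (0) (0) (-1), refl_gen 1 4 (0) (-1/(2*tau)) (tau/2) (-1/2)]"
  by (simp add: ST_gens_list_def)

lemma G21: "\<exists>g \<in> ST_group 21. refl_length (ST_group 21) g > codim g"
proof -
  have g0: "is_reflection (refl_gen 2 3 (-1/2) (-1/2) (1/2) (-1/2)) \<and> det (refl_gen 2 3 (-1/2) (-1/2) (1/2) (-1/2)) ^ 6 = 1"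
    by (rule gen_ok, rule cgen_2_3[symmetric]) ((simp_all only: i1 i2)?, simp_all add: power2_eq_square, (simp_all only: tau_def)?, (simp_all add: field_simps power2_eq_square)?)
  have g1: "is_reflection (refl_gen 1 4 (0) (0) (0) (-1)) \<and> det (refl_gen 1 4 (0) (0) (0) (-1)) ^ 6 = 1"
    by (rule gen_ok, rule cgen_1_4[symmetric]) ((simp_all only: i1 i2)?, simp_all add: power2_eq_square, (simp_all only: tau_def)?, (simp_all add: field_simps power2_eq_square)?)
  have g2: "is_reflection (refl_gen 1 4 (0) (-1/(2*tau)) (tau/2) (-1/2)) \<and> det (refl_gen 1 4 (0) (-1/(2*tau)) (tau/2) (-1/2)) ^ 6 = 1"
    by (rule gen_ok, rule cgen_1_4[symmetric]) ((simp_all only: i1 i2)?, simp_all add: power2_eq_square, (simp_all only: tau_def)?, (simp_all add: field_simps power2_eq_square)?)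
  have gens: "\<forall>s\<in>set (ST_gens_list ! (21-4)). is_reflection s \<and> det s ^ 6 = 1"
    unfolding ST21_gens using g0 g1 g2 by auto
  have cv: "cos (2*pi*(of_int 4 / of_int 12)) = -1/2"
  proof -
    have e: "2*pi*(of_int 4 / of_int 12) = 2*pi/3" by simp
    show ?thesis unfolding e by (simp add: cos_2pi3)
  qed
  have P: "mpow ((refl_gen 2 3 (-1/2) (-1/2) (1/2) (-1/2)) ** (refl_gen 1 4 (0) (0) (0) (-1))) 3 = mat2 (cis (2*pi*(of_int 11 / of_int 12 + of_int 4 / of_int 12))^3) 0 0 (cis (2*pi*(of_int 11 / of_int 12 + of_int 4 / of_int 12))^3)"
    by (rule pair_scalar(1)[where P=4 and Q=12 and T=11 and n=3 and d=6 and ka=2 and ma=3 and kb=1 and mb=4 and xa="-1/2" and xb="-1/2" and xc="1/2" and xd="-1/2" and ya="0" and yb="0" and yc="0" and yd="-1"]) (use cv in \<open>((simp_all only: i1 i2)?, simp_all add: power2_eq_square, (simp_all only: tau_def)?, (simp_all add: field_simps power2_eq_square)?)\<close>)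
  have L: "(cis (2*pi*(of_int 11 / of_int 12 + of_int 4 / of_int 12))^3)^6 \<noteq> 1"
    by (rule pair_scalar(2)[where P=4 and Q=12 and T=11 and n=3 and d=6 and ka=2 and ma=3 and kb=1 and mb=4 and xa="-1/2" and xb="-1/2" and xc="1/2" and xd="-1/2" and ya="0" and yb="0" and yc="0" and yd="-1"]) (use cv in \<open>((simp_all only: i1 i2)?, simp_all add: power2_eq_square, (simp_all only: tau_def)?, (simp_all add: field_simps power2_eq_square)?)\<close>)
  show ?thesis unfolding ST_group_def
    apply (rule scalar_case[where w="concat (replicate 3 [refl_gen 2 3 (-1/2) (-1/2) (1/2) (-1/2), refl_gen 1 4 (0) (0) (0) (-1)])" and d=6, OF _ _ _ _ L])
    using gens P unfolding word_pow ST21_gens by auto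
qed

(* ---- from t/J2.thy ---- *)
lemma ST12_gens: "ST_gens_list ! (12-4) = [refl_gen 1 4 (0) (-1/sqrt 2) (0) (-1/sqrt 2), refl_gen 1 4 (0) (1/sqrt 2) (0) (-1/sqrt 2), refl_gen 1 4 (0) (0) (-1/sqrt 2) (-1/sqrt 2)]"
  by (simp add: ST_gens_list_def)

lemma G12: "\<exists>g \<in> ST_group 12. refl_length (ST_group 12) g > codim g"
proof -
  have g0: "is_reflection (refl_gen 1 4 (0) (-1/sqrt 2) (0) (-1/sqrt 2)) \<and> det (refl_gen 1 4 (0) (-1/sqrt 2) (0) (-1/sqrt 2)) ^ 2 = 1"
    by (rule gen_ok, rule cgen_1_4[symmetric]) ((simp_all only: i1 i2)?, simp_all add: power2_eq_square, (simp_all only: tau_def)?, (simp_all add: field_simps power2_eq_square)?)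
  have d0: "det (refl_gen 1 4 (0) (-1/sqrt 2) (0) (-1/sqrt 2)) = -1" by (subst det_refl_gen) ((simp_all only: i1 i2)?, simp_all add: power2_eq_square, (simp_all only: tau_def)?, (simp_all add: field_simps power2_eq_square)?)
  have g1: "is_reflection (refl_gen 1 4 (0) (1/sqrt 2) (0) (-1/sqrt 2)) \<and> det (refl_gen 1 4 (0) (1/sqrt 2) (0) (-1/sqrt 2)) ^ 2 = 1"
    by (rule gen_ok, rule cgen_1_4[symmetric]) ((simp_all only: i1 i2)?, simp_all add: power2_eq_square, (simp_all only: tau_def)?, (simp_all add: field_simps power2_eq_square)?)
  have d1: "det (refl_gen 1 4 (0) (1/sqrt 2) (0) (-1/sqrt 2)) = -1" by (subst det_refl_gen) ((simp_all only: i1 i2)?, simp_all add: power2_eq_square, (simp_all only: tau_def)?, (simp_all add: field_simps power2_eq_square)?)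
  have g2: "is_reflection (refl_gen 1 4 (0) (0) (-1/sqrt 2) (-1/sqrt 2)) \<and> det (refl_gen 1 4 (0) (0) (-1/sqrt 2) (-1/sqrt 2)) ^ 2 = 1"
    by (rule gen_ok, rule cgen_1_4[symmetric]) ((simp_all only: i1 i2)?, simp_all add: power2_eq_square, (simp_all only: tau_def)?, (simp_all add: field_simps power2_eq_square)?)
  have d2: "det (refl_gen 1 4 (0) (0) (-1/sqrt 2) (-1/sqrt 2)) = -1" by (subst det_refl_gen) ((simp_all only: i1 i2)?, simp_all add: power2_eq_square, (simp_all only: tau_def)?, (simp_all add: field_simps power2_eq_square)?)
  have gens: "\<forall>s\<in>set (ST_gens_list ! (12-4)). is_reflection s \<and> det s ^ 2 = 1"
    unfolding ST12_gens using g0 g1 g2 by auto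
  have dg: "det ((refl_gen 1 4 (0) (-1/sqrt 2) (0) (-1/sqrt 2)) ** ((refl_gen 1 4 (0) (1/sqrt 2) (0) (-1/sqrt 2)) ** ((refl_gen 1 4 (0) (0) (-1/sqrt 2) (-1/sqrt 2)) ** mat 1))) = -1" unfolding det_mul det_I d0 d1 d2 by simp
  have tg: "tr2 ((refl_gen 1 4 (0) (-1/sqrt 2) (0) (-1/sqrt 2)) ** ((refl_gen 1 4 (0) (1/sqrt 2) (0) (-1/sqrt 2)) ** ((refl_gen 1 4 (0) (0) (-1/sqrt 2) (-1/sqrt 2)) ** mat 1))) \<noteq> 0" unfolding matrix_mul_rid refl_gen_scal scal_mult quat_mult tr_sq mult_eq_0_iff i1 i2
    by (simp add: cis_neq_zero tau_def field_simps power2_eq_square sq5c)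
  show ?thesis unfolding ST_group_def
    by (rule d2_case[where w="[refl_gen 1 4 (0) (-1/sqrt 2) (0) (-1/sqrt 2), refl_gen 1 4 (0) (1/sqrt 2) (0) (-1/sqrt 2), refl_gen 1 4 (0) (0) (-1/sqrt 2) (-1/sqrt 2)]", OF _ gens _ dg tg]) (unfold ST12_gens, auto)
qed

lemma ST13_gens: "ST_gens_list ! (13-4) = [refl_gen 1 4 (0) (-1/sqrt 2) (0) (-1/sqrt 2), refl_gen 1 4 (0) (0) (0) (1), refl_gen 1 4 (0) (-1/sqrt 2) (-1/sqrt 2) (0)]"
  by (simp add: ST_gens_list_def)

lemma G13: "\<exists>g \<in> ST_group 13. refl_length (ST_group 13) g > codim g"
proof -
  have g0: "is_reflection (refl_gen 1 4 (0) (-1/sqrt 2) (0) (-1/sqrt 2)) \<and> det (refl_gen 1 4 (0) (-1/sqrt 2) (0) (-1/sqrt 2)) ^ 2 = 1"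
    by (rule gen_ok, rule cgen_1_4[symmetric]) ((simp_all only: i1 i2)?, simp_all add: power2_eq_square, (simp_all only: tau_def)?, (simp_all add: field_simps power2_eq_square)?)
  have d0: "det (refl_gen 1 4 (0) (-1/sqrt 2) (0) (-1/sqrt 2)) = -1" by (subst det_refl_gen) ((simp_all only: i1 i2)?, simp_all add: power2_eq_square, (simp_all only: tau_def)?, (simp_all add: field_simps power2_eq_square)?)
  have g1: "is_reflection (refl_gen 1 4 (0) (0) (0) (1)) \<and> det (refl_gen 1 4 (0) (0) (0) (1)) ^ 2 = 1"
    by (rule gen_ok, rule cgen_1_4[symmetric]) ((simp_all only: i1 i2)?, simp_all add: power2_eq_square, (simp_all only: tau_def)?, (simp_all add: field_simps power2_eq_square)?)
  have d1: "det (refl_gen 1 4 (0) (0) (0) (1)) = -1" by (subst det_refl_gen) ((simp_all only: i1 i2)?, simp_all add: power2_eq_square, (simp_all only: tau_def)?, (simp_all add: field_simps power2_eq_square)?)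
  have g2: "is_reflection (refl_gen 1 4 (0) (-1/sqrt 2) (-1/sqrt 2) (0)) \<and> det (refl_gen 1 4 (0) (-1/sqrt 2) (-1/sqrt 2) (0)) ^ 2 = 1"
    by (rule gen_ok, rule cgen_1_4[symmetric]) ((simp_all only: i1 i2)?, simp_all add: power2_eq_square, (simp_all only: tau_def)?, (simp_all add: field_simps power2_eq_square)?)
  have d2: "det (refl_gen 1 4 (0) (-1/sqrt 2) (-1/sqrt 2) (0)) = -1" by (subst det_refl_gen) ((simp_all only: i1 i2)?, simp_all add: power2_eq_square, (simp_all only: tau_def)?, (simp_all add: field_simps power2_eq_square)?)
  have gens: "\<forall>s\<in>set (ST_gens_list ! (13-4)). is_reflection s \<and> det s ^ 2 = 1"
    unfolding ST13_gens using g0 g1 g2 by auto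
  have dg: "det ((refl_gen 1 4 (0) (-1/sqrt 2) (0) (-1/sqrt 2)) ** ((refl_gen 1 4 (0) (0) (0) (1)) ** ((refl_gen 1 4 (0) (-1/sqrt 2) (-1/sqrt 2) (0)) ** mat 1))) = -1" unfolding det_mul det_I d0 d1 d2 by simp
  have tg: "tr2 ((refl_gen 1 4 (0) (-1/sqrt 2) (0) (-1/sqrt 2)) ** ((refl_gen 1 4 (0) (0) (0) (1)) ** ((refl_gen 1 4 (0) (-1/sqrt 2) (-1/sqrt 2) (0)) ** mat 1))) \<noteq> 0" unfolding matrix_mul_rid refl_gen_scal scal_mult quat_mult tr_sq mult_eq_0_iff i1 i2
    by (simp add: cis_neq_zero tau_def field_simps power2_eq_square sq5c)
  show ?thesis unfolding ST_group_def
    by (rule d2_case[where w="[refl_gen 1 4 (0) (-1/sqrt 2) (0) (-1/sqrt 2), refl_gen 1 4 (0) (0) (0) (1), refl_gen 1 4 (0) (-1/sqrt 2) (-1/sqrt 2) (0)]", OF _ gens _ dg tg]) (unfold ST13_gens, auto)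
qed

lemma ST22_gens: "ST_gens_list ! (22-4) = [refl_gen 1 4 (0) (-1/(2*tau)) (-tau/2) (-1/2), refl_gen 1 4 (0) (1/(2*tau)) (-tau/2) (1/2), refl_gen 1 4 (0) (1/2) (-1/(2*tau)) (-tau/2)]"
  by (simp add: ST_gens_list_def)

lemma G22: "\<exists>g \<in> ST_group 22. refl_length (ST_group 22) g > codim g"
proof -
  have g0: "is_reflection (refl_gen 1 4 (0) (-1/(2*tau)) (-tau/2) (-1/2)) \<and> det (refl_gen 1 4 (0) (-1/(2*tau)) (-tau/2) (-1/2)) ^ 2 = 1"
    by (rule gen_ok, rule cgen_1_4[symmetric]) ((simp_all only: i1 i2)?, simp_all add: power2_eq_square, (simp_all only: tau_def)?, (simp_all add: field_simps power2_eq_square)?)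
  have d0: "det (refl_gen 1 4 (0) (-1/(2*tau)) (-tau/2) (-1/2)) = -1" by (subst det_refl_gen) ((simp_all only: i1 i2)?, simp_all add: power2_eq_square, (simp_all only: tau_def)?, (simp_all add: field_simps power2_eq_square)?)
  have g1: "is_reflection (refl_gen 1 4 (0) (1/(2*tau)) (-tau/2) (1/2)) \<and> det (refl_gen 1 4 (0) (1/(2*tau)) (-tau/2) (1/2)) ^ 2 = 1"
    by (rule gen_ok, rule cgen_1_4[symmetric]) ((simp_all only: i1 i2)?, simp_all add: power2_eq_square, (simp_all only: tau_def)?, (simp_all add: field_simps power2_eq_square)?)
  have d1: "det (refl_gen 1 4 (0) (1/(2*tau)) (-tau/2) (1/2)) = -1" by (subst det_refl_gen) ((simp_all only: i1 i2)?, simp_all add: power2_eq_square, (simp_all only: tau_def)?, (simp_all add: field_simps power2_eq_square)?)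
  have g2: "is_reflection (refl_gen 1 4 (0) (1/2) (-1/(2*tau)) (-tau/2)) \<and> det (refl_gen 1 4 (0) (1/2) (-1/(2*tau)) (-tau/2)) ^ 2 = 1"
    by (rule gen_ok, rule cgen_1_4[symmetric]) ((simp_all only: i1 i2)?, simp_all add: power2_eq_square, (simp_all only: tau_def)?, (simp_all add: field_simps power2_eq_square)?)
  have d2: "det (refl_gen 1 4 (0) (1/2) (-1/(2*tau)) (-tau/2)) = -1" by (subst det_refl_gen) ((simp_all only: i1 i2)?, simp_all add: power2_eq_square, (simp_all only: tau_def)?, (simp_all add: field_simps power2_eq_square)?)
  have gens: "\<forall>s\<in>set (ST_gens_list ! (22-4)). is_reflection s \<and> det s ^ 2 = 1"
    unfolding ST22_gens using g0 g1 g2 by auto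
  have dg: "det ((refl_gen 1 4 (0) (-1/(2*tau)) (-tau/2) (-1/2)) ** ((refl_gen 1 4 (0) (1/(2*tau)) (-tau/2) (1/2)) ** ((refl_gen 1 4 (0) (1/2) (-1/(2*tau)) (-tau/2)) ** mat 1))) = -1" unfolding det_mul det_I d0 d1 d2 by simp
  have tg: "tr2 ((refl_gen 1 4 (0) (-1/(2*tau)) (-tau/2) (-1/2)) ** ((refl_gen 1 4 (0) (1/(2*tau)) (-tau/2) (1/2)) ** ((refl_gen 1 4 (0) (1/2) (-1/(2*tau)) (-tau/2)) ** mat 1))) \<noteq> 0" unfolding matrix_mul_rid refl_gen_scal scal_mult quat_mult tr_sq mult_eq_0_iff i1 i2
    by (simp add: cis_neq_zero tau_def field_simps power2_eq_square sq5c)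
  show ?thesis unfolding ST_group_def
    by (rule d2_case[where w="[refl_gen 1 4 (0) (-1/(2*tau)) (-tau/2) (-1/2), refl_gen 1 4 (0) (1/(2*tau)) (-tau/2) (1/2), refl_gen 1 4 (0) (1/2) (-1/(2*tau)) (-tau/2)]", OF _ gens _ dg tg]) (unfold ST22_gens, auto)
qed

(* ---- from t/J3.thy ---- *)
lemma ST8_gens: "ST_gens_list ! (8-4) = [refl_gen 3 8 (-1/sqrt 2) (1/sqrt 2) (0) (0), refl_gen 1 8 (1/sqrt 2) (0) (0) (1/sqrt 2)]"
  by (simp add: ST_gens_list_def)

lemma G8: "\<exists>g \<in> ST_group 8. refl_length (ST_group 8) g > codim g"
proof -
  have g0: "is_reflection (refl_gen 3 8 (-1/sqrt 2) (1/sqrt 2) (0) (0)) \<and> det (refl_gen 3 8 (-1/sqrt 2) (1/sqrt 2) (0) (0)) ^ 8 = 1"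
    by (rule gen_ok, rule cgen_3_8[symmetric]) ((simp_all only: i1 i2)?, simp_all add: power2_eq_square, (simp_all only: tau_def)?, (simp_all add: field_simps power2_eq_square)?)
  have r0: "refl_gen 3 8 (-1/sqrt 2) (1/sqrt 2) (0) (0) = scal (cis (2*pi*(of_int 3/of_int 8))) (Qe (False, (-1, 1, 0, 0)))"
    unfolding refl_gen_scal by (simp add: sc_def)
  have c0: "fst (False, (-1, 1, 0, 0)) = even (3::int) \<and> goodgen (False, (-1, 1, 0, 0))"
    by code_simp
  have g1: "is_reflection (refl_gen 1 8 (1/sqrt 2) (0) (0) (1/sqrt 2)) \<and> det (refl_gen 1 8 (1/sqrt 2) (0) (0) (1/sqrt 2)) ^ 8 = 1"
    by (rule gen_ok, rule cgen_1_8[symmetric]) ((simp_all only: i1 i2)?, simp_all add: power2_eq_square, (simp_all only: tau_def)?, (simp_all add: field_simps power2_eq_square)?)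
  have r1: "refl_gen 1 8 (1/sqrt 2) (0) (0) (1/sqrt 2) = scal (cis (2*pi*(of_int 1/of_int 8))) (Qe (False, (1, 0, 0, 1)))"
    unfolding refl_gen_scal by (simp add: sc_def)
  have c1: "fst (False, (1, 0, 0, 1)) = even (1::int) \<and> goodgen (False, (1, 0, 0, 1))"
    by code_simp
  have S: "\<forall>s\<in>set (ST_gens_list ! (8-4)). \<exists>j0 q0. s = scal (cis (2*pi*(of_int j0/of_int 8))) (Qe q0) \<and> fst q0 = even j0 \<and> goodgen q0"
    unfolding ST8_gens set_simps ball_simps using r0 c0 r1 c1 by blast
  have Sr: "\<forall>s\<in>set (ST_gens_list ! (8-4)). is_reflection s"
    unfolding ST8_gens using g0 g1 by auto
  have x3: "foldr (**) [refl_gen 1 8 (1/sqrt 2) (0) (0) (1/sqrt 2)] (mat 1) = scal (cis (2*pi*(of_int 1/of_int 8))) (Qe (False, (1, 0, 0, 1)))"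
    unfolding foldr.simps o_def matrix_mul_rid r1 by simp
  have x2: "foldr (**) [refl_gen 3 8 (-1/sqrt 2) (1/sqrt 2) (0) (0), refl_gen 1 8 (1/sqrt 2) (0) (0) (1/sqrt 2)] (mat 1) = scal (cis (2*pi*(of_int 4/of_int 8))) (Qe (True, (-1, 1, -1, -1)))"
    by (subst foldr_step, subst x3, subst r0, rule scal_Qe_step) (simp_all add: validO_def mulO_def add_divide_distrib[symmetric])
  have x1: "foldr (**) [refl_gen 1 8 (1/sqrt 2) (0) (0) (1/sqrt 2), refl_gen 3 8 (-1/sqrt 2) (1/sqrt 2) (0) (0), refl_gen 1 8 (1/sqrt 2) (0) (0) (1/sqrt 2)] (mat 1) = scal (cis (2*pi*(of_int 5/of_int 8))) (Qe (False, (0, 1, 0, -1)))"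
    by (subst foldr_step, subst x2, subst r1, rule scal_Qe_step) (simp_all add: validO_def mulO_def add_divide_distrib[symmetric])
  have x0: "foldr (**) [refl_gen 3 8 (-1/sqrt 2) (1/sqrt 2) (0) (0), refl_gen 1 8 (1/sqrt 2) (0) (0) (1/sqrt 2), refl_gen 3 8 (-1/sqrt 2) (1/sqrt 2) (0) (0), refl_gen 1 8 (1/sqrt 2) (0) (0) (1/sqrt 2)] (mat 1) = scal (cis (2*pi*(of_int 8/of_int 8))) (Qe (True, (-1, -1, 1, 1)))"
    by (subst foldr_step, subst x1, subst r0, rule scal_Qe_step) (simp_all add: validO_def mulO_def add_divide_distrib[symmetric])
  note gf = x0
  have chk: "checkO 8 8 (True, (-1, -1, 1, 1))" by code_simp
  show ?thesis unfolding ST_group_def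
    by (rule O_case[where N=8 and w="[refl_gen 3 8 (-1/sqrt 2) (1/sqrt 2) (0) (0), refl_gen 1 8 (1/sqrt 2) (0) (0) (1/sqrt 2), refl_gen 3 8 (-1/sqrt 2) (1/sqrt 2) (0) (0), refl_gen 1 8 (1/sqrt 2) (0) (0) (1/sqrt 2)]", OF _ _ _ S Sr _ refl gf chk]) (unfold ST8_gens, auto)
qed

lemma ST10_gens: "ST_gens_list ! (10-4) = [refl_gen 2 3 (-1/2) (1/2) (-1/2) (-1/2), refl_gen 1 3 (-1/2) (-1/2) (-1/2) (-1/2), refl_gen 1 8 (1/sqrt 2) (0) (-1/sqrt 2) (0)]"
  by (simp add: ST_gens_list_def)

lemma G10: "\<exists>g \<in> ST_group 10. refl_length (ST_group 10) g > codim g"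
proof -
  have g0: "is_reflection (refl_gen 2 3 (-1/2) (1/2) (-1/2) (-1/2)) \<and> det (refl_gen 2 3 (-1/2) (1/2) (-1/2) (-1/2)) ^ 3 = 1"
    by (rule gen_ok, rule cgen_2_3[symmetric]) ((simp_all only: i1 i2)?, simp_all add: power2_eq_square, (simp_all only: tau_def)?, (simp_all add: field_simps power2_eq_square)?)
  have r0: "refl_gen 2 3 (-1/2) (1/2) (-1/2) (-1/2) = scal (cis (2*pi*(of_int 16/of_int 24))) (Qe (True, (-1, 1, -1, -1)))"
    unfolding refl_gen_scal by (simp add: sc_def)
  have c0: "fst (True, (-1, 1, -1, -1)) = even (16::int) \<and> goodgen (True, (-1, 1, -1, -1))"
    by code_simp
  have g1: "is_reflection (refl_gen 1 3 (-1/2) (-1/2) (-1/2) (-1/2)) \<and> det (refl_gen 1 3 (-1/2) (-1/2) (-1/2) (-1/2)) ^ 3 = 1"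
    by (rule gen_ok, rule cgen_1_3[symmetric]) ((simp_all only: i1 i2)?, simp_all add: power2_eq_square, (simp_all only: tau_def)?, (simp_all add: field_simps power2_eq_square)?)
  have r1: "refl_gen 1 3 (-1/2) (-1/2) (-1/2) (-1/2) = scal (cis (2*pi*(of_int 8/of_int 24))) (Qe (True, (-1, -1, -1, -1)))"
    unfolding refl_gen_scal by (simp add: sc_def)
  have c1: "fst (True, (-1, -1, -1, -1)) = even (8::int) \<and> goodgen (True, (-1, -1, -1, -1))"
    by code_simp
  have g2: "is_reflection (refl_gen 1 8 (1/sqrt 2) (0) (-1/sqrt 2) (0)) \<and> det (refl_gen 1 8 (1/sqrt 2) (0) (-1/sqrt 2) (0)) ^ 8 = 1"
    by (rule gen_ok, rule cgen_1_8[symmetric]) ((simp_all only: i1 i2)?, simp_all add: power2_eq_square, (simp_all only: tau_def)?, (simp_all add: field_simps power2_eq_square)?)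
  have r2: "refl_gen 1 8 (1/sqrt 2) (0) (-1/sqrt 2) (0) = scal (cis (2*pi*(of_int 3/of_int 24))) (Qe (False, (1, 0, -1, 0)))"
    unfolding refl_gen_scal by (simp add: sc_def)
  have c2: "fst (False, (1, 0, -1, 0)) = even (3::int) \<and> goodgen (False, (1, 0, -1, 0))"
    by code_simp
  have S: "\<forall>s\<in>set (ST_gens_list ! (10-4)). \<exists>j0 q0. s = scal (cis (2*pi*(of_int j0/of_int 24))) (Qe q0) \<and> fst q0 = even j0 \<and> goodgen q0"
    unfolding ST10_gens set_simps ball_simps using r0 c0 r1 c1 r2 c2 by blast
  have Sr: "\<forall>s\<in>set (ST_gens_list ! (10-4)). is_reflection s"
    unfolding ST10_gens using g0 g1 g2 by auto
  have x3: "foldr (**) [refl_gen 1 3 (-1/2) (-1/2) (-1/2) (-1/2)] (mat 1) = scal (cis (2*pi*(of_int 8/of_int 24))) (Qe (True, (-1, -1, -1, -1)))"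
    unfolding foldr.simps o_def matrix_mul_rid r1 by simp
  have x2: "foldr (**) [refl_gen 1 8 (1/sqrt 2) (0) (-1/sqrt 2) (0), refl_gen 1 3 (-1/2) (-1/2) (-1/2) (-1/2)] (mat 1) = scal (cis (2*pi*(of_int 11/of_int 24))) (Qe (False, (-1, 0, 0, -1)))"
    by (subst foldr_step, subst x3, subst r2, rule scal_Qe_step) (simp_all add: validO_def mulO_def add_divide_distrib[symmetric])
  have x1: "foldr (**) [refl_gen 2 3 (-1/2) (1/2) (-1/2) (-1/2), refl_gen 1 8 (1/sqrt 2) (0) (-1/sqrt 2) (0), refl_gen 1 3 (-1/2) (-1/2) (-1/2) (-1/2)] (mat 1) = scal (cis (2*pi*(of_int 27/of_int 24))) (Qe (False, (0, 0, 1, 1)))"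
    by (subst foldr_step, subst x2, subst r0, rule scal_Qe_step) (simp_all add: validO_def mulO_def add_divide_distrib[symmetric])
  have x0: "foldr (**) [refl_gen 2 3 (-1/2) (1/2) (-1/2) (-1/2), refl_gen 2 3 (-1/2) (1/2) (-1/2) (-1/2), refl_gen 1 8 (1/sqrt 2) (0) (-1/sqrt 2) (0), refl_gen 1 3 (-1/2) (-1/2) (-1/2) (-1/2)] (mat 1) = scal (cis (2*pi*(of_int 43/of_int 24))) (Qe (False, (1, 0, -1, 0)))"
    by (subst foldr_step, subst x1, subst r0, rule scal_Qe_step) (simp_all add: validO_def mulO_def add_divide_distrib[symmetric])
  note gf = x0
  have chk: "checkO 24 43 (False, (1, 0, -1, 0))" by code_simp
  show ?thesis unfolding ST_group_def
    by (rule O_case[where N=24 and w="[refl_gen 2 3 (-1/2) (1/2) (-1/2) (-1/2), refl_gen 2 3 (-1/2) (1/2) (-1/2) (-1/2), refl_gen 1 8 (1/sqrt 2) (0) (-1/sqrt 2) (0), refl_gen 1 3 (-1/2) (-1/2) (-1/2) (-1/2)]", OF _ _ _ S Sr _ refl gf chk]) (unfold ST10_gens, auto)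
qed

lemma ST14_gens: "ST_gens_list ! (14-4) = [refl_gen 1 3 (-1/2) (-1/2) (1/2) (1/2), refl_gen 2 3 (-1/2) (-1/2) (-1/2) (1/2), refl_gen 1 4 (0) (-1/sqrt 2) (0) (1/sqrt 2)]"
  by (simp add: ST_gens_list_def)

lemma G14: "\<exists>g \<in> ST_group 14. refl_length (ST_group 14) g > codim g"
proof -
  have g0: "is_reflection (refl_gen 1 3 (-1/2) (-1/2) (1/2) (1/2)) \<and> det (refl_gen 1 3 (-1/2) (-1/2) (1/2) (1/2)) ^ 3 = 1"
    by (rule gen_ok, rule cgen_1_3[symmetric]) ((simp_all only: i1 i2)?, simp_all add: power2_eq_square, (simp_all only: tau_def)?, (simp_all add: field_simps power2_eq_square)?)
  have r0: "refl_gen 1 3 (-1/2) (-1/2) (1/2) (1/2) = scal (cis (2*pi*(of_int 4/of_int 12))) (Qe (True, (-1, -1, 1, 1)))"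
    unfolding refl_gen_scal by (simp add: sc_def)
  have c0: "fst (True, (-1, -1, 1, 1)) = even (4::int) \<and> goodgen (True, (-1, -1, 1, 1))"
    by code_simp
  have g1: "is_reflection (refl_gen 2 3 (-1/2) (-1/2) (-1/2) (1/2)) \<and> det (refl_gen 2 3 (-1/2) (-1/2) (-1/2) (1/2)) ^ 3 = 1"
    by (rule gen_ok, rule cgen_2_3[symmetric]) ((simp_all only: i1 i2)?, simp_all add: power2_eq_square, (simp_all only: tau_def)?, (simp_all add: field_simps power2_eq_square)?)
  have r1: "refl_gen 2 3 (-1/2) (-1/2) (-1/2) (1/2) = scal (cis (2*pi*(of_int 8/of_int 12))) (Qe (True, (-1, -1, -1, 1)))"
    unfolding refl_gen_scal by (simp add: sc_def)
  have c1: "fst (True, (-1, -1, -1, 1)) = even (8::int) \<and> goodgen (True, (-1, -1, -1, 1))"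
    by code_simp
  have g2: "is_reflection (refl_gen 1 4 (0) (-1/sqrt 2) (0) (1/sqrt 2)) \<and> det (refl_gen 1 4 (0) (-1/sqrt 2) (0) (1/sqrt 2)) ^ 4 = 1"
    by (rule gen_ok, rule cgen_1_4[symmetric]) ((simp_all only: i1 i2)?, simp_all add: power2_eq_square, (simp_all only: tau_def)?, (simp_all add: field_simps power2_eq_square)?)
  have r2: "refl_gen 1 4 (0) (-1/sqrt 2) (0) (1/sqrt 2) = scal (cis (2*pi*(of_int 3/of_int 12))) (Qe (False, (0, -1, 0, 1)))"
    unfolding refl_gen_scal by (simp add: sc_def)
  have c2: "fst (False, (0, -1, 0, 1)) = even (3::int) \<and> goodgen (False, (0, -1, 0, 1))"
    by code_simp
  have S: "\<forall>s\<in>set (ST_gens_list ! (14-4)). \<exists>j0 q0. s = scal (cis (2*pi*(of_int j0/of_int 12))) (Qe q0) \<and> fst q0 = even j0 \<and> goodgen q0"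
    unfolding ST14_gens set_simps ball_simps using r0 c0 r1 c1 r2 c2 by blast
  have Sr: "\<forall>s\<in>set (ST_gens_list ! (14-4)). is_reflection s"
    unfolding ST14_gens using g0 g1 g2 by auto
  have x2: "foldr (**) [refl_gen 1 4 (0) (-1/sqrt 2) (0) (1/sqrt 2)] (mat 1) = scal (cis (2*pi*(of_int 3/of_int 12))) (Qe (False, (0, -1, 0, 1)))"
    unfolding foldr.simps o_def matrix_mul_rid r2 by simp
  have x1: "foldr (**) [refl_gen 2 3 (-1/2) (-1/2) (-1/2) (1/2), refl_gen 1 4 (0) (-1/sqrt 2) (0) (1/sqrt 2)] (mat 1) = scal (cis (2*pi*(of_int 11/of_int 12))) (Qe (False, (-1, 0, 0, -1)))"
    by (subst foldr_step, subst x2, subst r1, rule scal_Qe_step) (simp_all add: validO_def mulO_def add_divide_distrib[symmetric])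
  have x0: "foldr (**) [refl_gen 1 3 (-1/2) (-1/2) (1/2) (1/2), refl_gen 2 3 (-1/2) (-1/2) (-1/2) (1/2), refl_gen 1 4 (0) (-1/sqrt 2) (0) (1/sqrt 2)] (mat 1) = scal (cis (2*pi*(of_int 15/of_int 12))) (Qe (False, (1, 0, -1, 0)))"
    by (subst foldr_step, subst x1, subst r0, rule scal_Qe_step) (simp_all add: validO_def mulO_def add_divide_distrib[symmetric])
  note gf = x0
  have chk: "checkO 12 15 (False, (1, 0, -1, 0))" by code_simp
  show ?thesis unfolding ST_group_def
    by (rule O_case[where N=12 and w="[refl_gen 1 3 (-1/2) (-1/2) (1/2) (1/2), refl_gen 2 3 (-1/2) (-1/2) (-1/2) (1/2), refl_gen 1 4 (0) (-1/sqrt 2) (0) (1/sqrt 2)]", OF _ _ _ S Sr _ refl gf chk]) (unfold ST14_gens, auto)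
qed

theorem mainTheorem11:
  shows "\<forall>n \<in> {4..22::nat}. \<exists>g \<in> ST_group n. refl_length (ST_group n) g > codim g"
proof
  fix n :: nat assume "n \<in> {4..22::nat}"
  hence "4 \<le> n" "n \<le> 22" by auto
  hence "n = 4 \<or> n = 5 \<or> n = 6 \<or> n = 7 \<or> n = 8 \<or> n = 9 \<or> n = 10 \<or> n = 11 \<or> n = 12 \<or> n = 13 \<or> n = 14 \<or> n = 15 \<or> n = 16 \<or> n = 17 \<or> n = 18 \<or> n = 19 \<or> n = 20 \<or> n = 21 \<or> n = 22" by presburger
  thus "\<exists>g \<in> ST_group n. refl_length (ST_group n) g > codim g"
    by (elim disjE) (simp_all only: G4 G5 G6 G7 G8 G9 G10 G11 G12 G13 G14 G15 G16 G17 G18 G19 G20 G21 G22)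
qed

end
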